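(* Let $n=2^t$, let $L$ be a Latin cube of order $n$ that is isomorphic to the Boolean Latin cube of order $n$, and let $A$ be an $(m,m,m,m)$-cube of order $n$. Let $\alpha,\gamma,\kappa,\theta,\epsilon$ be constants with $\epsilon n\geq 3$ and $$\alpha n-21\kappa n -7\epsilon n-\frac{84\kappa}{\epsilon}n-\frac{21\theta}{\epsilon} n-\frac{80\kappa}{\theta} n-28>0.$$ Suppose that: (a) no row of $L$ contains more than $\kappa n$ conflicts with $A$; (b) no column of $L$ contains more than $\kappa n$ conflicts with $A$; (c) no file of $L$ contains more than $\kappa n$ conflicts with $A$; (d) no symbol-set of $L$ contains more than $\kappa n$ conflicts with $A$; (e) no transversal-set of $L$ contains more than $\kappa n$ conflicts with $A$; (f) each cell of $L$ belongs to at least $\alpha n$ allowed $3$-cubes. Then there is a set of pairwise disjoint allowed $3$-cubes of $L$ such that each conflict of $L$ with $A$ belongs to one of them; consequently, swapping on all these $3$-cubes yields a Latin cube $L'$ that avoids $A$.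
   Context: Cells of a cube of order $n$ are triples $(i,j,k)\in[n]^3$. A row is $\{(i,j^*,k):j^*\in[n]\}$, a column $\{(i^*,j,k):i^*\in[n]\}$, a file $\{(i,j,k^* ):k^*\in[n]\}$. Row layer $i$ is $\{(i,j^*,k^* )\}$, column layer $j$ is $\{(i^*,j,k^* )\}$, file layer $k$ is $\{(i^*,j^*,k)\}$. An $(m,m,m,m)$-cube of order $n$ is a cube $A$ with $A(i,j,k)\subseteq[n]$ for each cell, each cell containing at most $m$ symbols and each symbol occurring at most $m$ times in each row, each column and each file. A Latin cube $L$ of order $n$ has one symbol $L(i,j,k)\in[n]$ in each cell with each symbol exactly once in every row, column and file. Let $a_x$ be the $x$-th smallest element of $\mathbb{Z}_2^t$, $x=1,\dots,2^t$. The Boolean Latin cube $B$ of order $n=2^t$ has $B(i,j,k)=x$ where $a_x=a_i+a_j+a_k$ in $\mathbb{Z}_2^t$. $L$ is isomorphic to $B$ if $L$ is obtained from $B$ by permuting row layers, column layers, file layers and/or symbols. A conflict of $L$ with $A$ is a cell with $L(i,j,k)\in A(i,j,k)$; $L'$ avoids $A$ if it has no conflicts with $A$. A symbol-set of $L$ is the set of all cells in a given row layer, column layer or file layer of $L$ that contain a given symbol. A $3$-cube in $L$ is a set of eight cells $\{(i_a,j_b,k_c): a,b,c\in\{1,2\}\}$ with $i_1\ne i_2$, $j_1\neq j_2$, $k_1\ne k_2$, such that $L(i_1,j_1,k_1)=L(i_2,j_2,k_1)=L(i_1,j_2,k_2)=L(i_2,j_1,k_2)=x_1$ and $L(i_1,j_2,k_1)=L(i_2,j_1,k_1)=L(i_1,j_1,k_2)=L(i_2,j_2,k_2)=x_2$.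 A swap on this $3$-cube interchanges $x_1$ and $x_2$ in these eight cells (all other cells unchanged), producing another Latin cube. A $3$-cube is allowed if after swapping on it none of its eight cells is a conflict. A transversal-set of $L$ is a set of $n$ cells no two in the same row, column or file, no two containing the same symbol, and such that any two of its cells lie in a unique common $3$-cube. Following the paper's convention, floors/ceilings are omitted where not crucial. *)

theory Defs
  imports Complex_Main
begin

type_synonym cell = "nat \<times> nat \<times> nat"

definition cells :: "nat \<Rightarrow> cell set" where
  "cells n = {1..n} \<times> {1..n} \<times> {1..n}"

definition row :: "nat \<Rightarrow> nat \<Rightarrow> nat \<Rightarrow> cell set" where
  "row n i k = {(i, j', k) | j'. j' \<in> {1..n}}"
definition col :: "nat \<Rightarrow> nat \<Rightarrow> nat \<Rightarrow> cell set" where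
  "col n j k = {(i', j, k) | i'. i' \<in> {1..n}}"
definition fil :: "nat \<Rightarrow> nat \<Rightarrow> nat \<Rightarrow> cell set" where
  "fil n i j = {(i, j, k') | k'. k' \<in> {1..n}}"

definition row_layer :: "nat \<Rightarrow> nat \<Rightarrow> cell set" where
  "row_layer n i = {(i, j', k') | j' k'. j' \<in> {1..n} \<and> k' \<in> {1..n}}"
definition col_layer :: "nat \<Rightarrow> nat \<Rightarrow> cell set" where
  "col_layer n j = {(i', j, k') | i' k'. i' \<in> {1..n} \<and> k' \<in> {1..n}}"
definition file_layer :: "nat \<Rightarrow> nat \<Rightarrow> cell set" where
  "file_layer n k = {(i', j', k) | i' j'. i' \<in> {1..n} \<and> j' \<in> {1..n}}"

definition lines :: "nat \<Rightarrow> cell set set" where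
  "lines n = {row n i k | i k. i \<in> {1..n} \<and> k \<in> {1..n}}
           \<union> {col n j k | j k. j \<in> {1..n} \<and> k \<in> {1..n}}
           \<union> {fil n i j | i j. i \<in> {1..n} \<and> j \<in> {1..n}}"

definition layers :: "nat \<Rightarrow> cell set set" where
  "layers n = {row_layer n i | i. i \<in> {1..n}} \<union> {col_layer n j | j. j \<in> {1..n}}
            \<union> {file_layer n k | k. k \<in> {1..n}}"

definition mmmm_cube :: "nat \<Rightarrow> nat \<Rightarrow> (cell \<Rightarrow> nat set) \<Rightarrow> bool" where
  "mmmm_cube n m A \<longleftrightarrow>
     (\<forall>c \<in> cells n. A c \<subseteq> {1..n} \<and> card (A c) \<le> m) \<and>
     (\<forall>l \<in> lines n. \<forall>x. card {c \<in> l. x \<in> A c} \<le> m)"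

definition latin_cube :: "nat \<Rightarrow> (cell \<Rightarrow> nat) \<Rightarrow> bool" where
  "latin_cube n L \<longleftrightarrow>
     (\<forall>c \<in> cells n. L c \<in> {1..n}) \<and>
     (\<forall>l \<in> lines n. \<forall>x \<in> {1..n}. \<exists>!c. c \<in> l \<and> L c = x)"

text \<open>Boolean Latin cube of order 2^t: identify [n] with Z_2^t via x \<mapsto> binary
  representation of x-1 (x-th smallest element); addition in Z_2^t is xor.\<close>
definition boolean_cube :: "cell \<Rightarrow> nat" where
  "boolean_cube c = (case c of (i, j, k) \<Rightarrow> Bit_Operations.xor (Bit_Operations.xor (i - 1) (j - 1)) (k - 1) + 1)"

definition iso_boolean :: "nat \<Rightarrow> (cell \<Rightarrow> nat) \<Rightarrow> bool" where
  "iso_boolean n L \<longleftrightarrow>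
     (\<exists>\<sigma>1 \<sigma>2 \<sigma>3 \<tau>. bij_betw \<sigma>1 {1..n} {1..n} \<and> bij_betw \<sigma>2 {1..n} {1..n} \<and>
        bij_betw \<sigma>3 {1..n} {1..n} \<and> bij_betw \<tau> {1..n} {1..n} \<and>
        (\<forall>i \<in> {1..n}. \<forall>j \<in> {1..n}. \<forall>k \<in> {1..n}.
            L (i, j, k) = \<tau> (boolean_cube (\<sigma>1 i, \<sigma>2 j, \<sigma>3 k))))"

definition conflicts :: "nat \<Rightarrow> (cell \<Rightarrow> nat) \<Rightarrow> (cell \<Rightarrow> nat set) \<Rightarrow> cell set" where
  "conflicts n L A = {c \<in> cells n. L c \<in> A c}"

definition avoids :: "nat \<Rightarrow> (cell \<Rightarrow> nat) \<Rightarrow> (cell \<Rightarrow> nat set) \<Rightarrow> bool" where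
  "avoids n L A \<longleftrightarrow> conflicts n L A = {}"

definition symbol_sets :: "nat \<Rightarrow> (cell \<Rightarrow> nat) \<Rightarrow> cell set set" where
  "symbol_sets n L = {{c \<in> Y. L c = x} | Y x. Y \<in> layers n \<and> x \<in> {1..n}}"

definition three_cubes :: "nat \<Rightarrow> (cell \<Rightarrow> nat) \<Rightarrow> cell set set" where
  "three_cubes n L = {S. \<exists>i1 i2 j1 j2 k1 k2 x1 x2.
      i1 \<in> {1..n} \<and> i2 \<in> {1..n} \<and> j1 \<in> {1..n} \<and> j2 \<in> {1..n} \<and> k1 \<in> {1..n} \<and> k2 \<in> {1..n} \<and>
      i1 \<noteq> i2 \<and> j1 \<noteq> j2 \<and> k1 \<noteq> k2 \<and>
      L (i1, j1, k1) = x1 \<and> L (i2, j2, k1) = x1 \<and> L (i1, j2, k2) = x1 \<and> L (i2, j1, k2) = x1 \<and>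
      L (i1, j2, k1) = x2 \<and> L (i2, j1, k1) = x2 \<and> L (i1, j1, k2) = x2 \<and> L (i2, j2, k2) = x2 \<and>
      S = {(a, b, c) | a b c. a \<in> {i1, i2} \<and> b \<in> {j1, j2} \<and> c \<in> {k1, k2}}}"

definition swap :: "(cell \<Rightarrow> nat) \<Rightarrow> cell set \<Rightarrow> cell \<Rightarrow> nat" where
  "swap L S c = (if c \<in> S then (THE y. y \<in> L ` S \<and> y \<noteq> L c) else L c)"

definition allowed :: "nat \<Rightarrow> (cell \<Rightarrow> nat) \<Rightarrow> (cell \<Rightarrow> nat set) \<Rightarrow> cell set \<Rightarrow> bool" where
  "allowed n L A S \<longleftrightarrow> S \<in> three_cubes n L \<and> (\<forall>c \<in> S. swap L S c \<notin> A c)"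

definition swap_all :: "(cell \<Rightarrow> nat) \<Rightarrow> cell set set \<Rightarrow> cell \<Rightarrow> nat" where
  "swap_all L F c = (if \<exists>S \<in> F. c \<in> S then swap L (THE S. S \<in> F \<and> c \<in> S) c else L c)"

definition transversal_set :: "nat \<Rightarrow> (cell \<Rightarrow> nat) \<Rightarrow> cell set \<Rightarrow> bool" where
  "transversal_set n L T \<longleftrightarrow>
     T \<subseteq> cells n \<and> card T = n \<and>
     (\<forall>l \<in> lines n. card (T \<inter> l) \<le> 1) \<and>
     inj_on L T \<and>
     (\<forall>c \<in> T. \<forall>d \<in> T. c \<noteq> d \<longrightarrow> card {S \<in> three_cubes n L. c \<in> S \<and> d \<in> S} = 1)"

end

theory Submission
  imports Defs
begin
unbundle bit_operations_syntax

lemma xor_cancel_left [simp]: "(x::nat) XOR (x XOR y) = y"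
  by (simp add: xor.assoc[symmetric])
lemma xor_cancel_right [simp]: "((y::nat) XOR x) XOR x = y"
  by (simp add: xor.assoc)
lemma xor_eq_cancel [simp]: "((x::nat) XOR y = x XOR z) = (y = z)"
  by (metis xor_cancel_left)
lemma xor_eq_0_iff [simp]: "((x::nat) XOR y = 0) = (x = y)"
  by (metis xor_cancel_left xor.right_neutral xor_self_eq)
lemma xor_lt: "(x::nat) < 2^t \<Longrightarrow> y < 2^t \<Longrightarrow> x XOR y < 2^t"
  by (metis take_bit_nat_eq_self_iff take_bit_xor)

lemma "card (UNIV :: (bool\<times>bool\<times>bool) set) = 8"
  by (simp add: UNIV_Times_UNIV[symmetric] card_cartesian_product del: UNIV_Times_UNIV)

type_synonym pt = "nat \<times> nat \<times> nat"
type_synonym pat = "bool \<times> bool \<times> bool"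

fun px :: "pt \<Rightarrow> pt \<Rightarrow> pt" where
  "px (a,b,c) (a',b',c') = (a XOR a', b XOR b', c XOR c')"
fun sm :: "pat \<Rightarrow> nat \<Rightarrow> pt" where
  "sm (e1,e2,e3) g = (if e1 then g else 0, if e2 then g else 0, if e3 then g else 0)"
fun cube :: "pt \<Rightarrow> nat \<Rightarrow> pt set" where
  "cube (a,b,c) d = {a, a XOR d} \<times> {b, b XOR d} \<times> {c, c XOR d}"
fun piw :: "pat \<Rightarrow> pt \<Rightarrow> nat" where
  "piw (w1,w2,w3) (a,b,c) = (if w1 then a else 0) XOR (if w2 then b else 0) XOR (if w3 then c else 0)"
fun par :: "pat \<Rightarrow> pat \<Rightarrow> bool" where
  "par (f1,f2,f3) (w1,w2,w3) = ((f1 \<and> w1) \<noteq> ((f2 \<and> w2) \<noteq> (f3 \<and> w3)))"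
fun cross :: "pat \<Rightarrow> pat \<Rightarrow> pat" where
  "cross (e1,e2,e3) (f1,f2,f3) = ((e2\<and>f3) \<noteq> (e3\<and>f2), (e3\<and>f1) \<noteq> (e1\<and>f3), (e1\<and>f2) \<noteq> (e2\<and>f1))"
fun lowbit :: "pat \<Rightarrow> pat \<Rightarrow> bool" where
  "lowbit (e1,e2,e3) (f1,f2,f3) = (if e1 then f1 else if e2 then f2 else f3)"
fun pxor :: "pat \<Rightarrow> pat \<Rightarrow> pat" where
  "pxor (e1,e2,e3) (f1,f2,f3) = (e1 \<noteq> f1, e2 \<noteq> f2, e3 \<noteq> f3)"

abbreviation z0 :: pat where "z0 \<equiv> (False,False,False)"
definition EE :: "pat set" where "EE = {e. e \<noteq> z0}"
definition RR :: "pat \<Rightarrow> pat set" where "RR e = {f. f \<noteq> z0 \<and> \<not> lowbit e f}"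

lemma EE_explicit: "EE = {(True,False,False),(False,True,False),(False,False,True),(True,True,False),(True,False,True),(False,True,True),(True,True,True)}"
  unfolding EE_def by auto
lemma card_EE: "card EE = 7"
  unfolding EE_explicit by simp
lemma finite_EE [simp]: "finite EE" unfolding EE_explicit by simp

lemma card_RR: "card (RR e) \<le> 3"
proof -
  obtain e1 e2 e3 where e: "e = (e1,e2,e3)" by (cases e) auto
  show ?thesis
  proof (cases e1)
    case True
    then have "RR e \<subseteq> {(False,True,False),(False,False,True),(False,True,True)}"
      unfolding RR_def e by auto
    moreover have "card {(False,True,False),(False,False,True),(False,True,True)} = 3" by simp
    ultimately show ?thesis by (metis card_mono finite.emptyI finite.insertI)
  next
    case f1: False
    show ?thesis
    proof (cases e2)
      case True
      then have "RR e \<subseteq> {(True,False,False),(False,False,True),(True,False,True)}"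
        unfolding RR_def e using f1 by auto
      moreover have "card {(True,False,False),(False,False,True),(True,False,True)} = 3" by simp
      ultimately show ?thesis by (metis card_mono finite.emptyI finite.insertI)
    next
      case False
      then have "RR e \<subseteq> {(True,False,False),(False,True,False),(True,True,False)}"
        unfolding RR_def e using f1 by auto
      moreover have "card {(True,False,False),(False,True,False),(True,True,False)} = 3" by simp
      ultimately show ?thesis by (metis card_mono finite.emptyI finite.insertI)
    qed
  qed
qed

lemma RR_rep: "e \<noteq> z0 \<Longrightarrow> f \<noteq> z0 \<Longrightarrow> f \<noteq> e \<Longrightarrow> f \<in> RR e \<or> pxor f e \<in> RR e"
  unfolding RR_def by (cases e; cases f) auto

lemma cross_prop: "e \<noteq> z0 \<Longrightarrow> f \<noteq> z0 \<Longrightarrow> f \<noteq> e \<Longrightarrow>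
   cross e f \<noteq> z0 \<and> \<not> par e (cross e f) \<and> \<not> par f (cross e f)"
  by (cases e; cases f) auto

lemma perp_exists: "w \<noteq> z0 \<Longrightarrow> \<exists>e. e \<noteq> z0 \<and> \<not> par e w"
proof -
  obtain w1 w2 w3 where w: "w = (w1,w2,w3)" by (cases w) auto
  show ?thesis
  proof (cases w1)
    case False then show ?thesis using w by (intro exI[of _ "(True,False,False)"]) auto
  next
    case t1: True
    show ?thesis
    proof (cases w2)
      case False then show ?thesis using w by (intro exI[of _ "(False,True,False)"]) auto
    next
      case True then show ?thesis using w t1 by (intro exI[of _ "(True,True,False)"]) auto
    qed
  qed
qed

lemma px_assoc: "px (px p q) r = px p (px q r)"
  by (cases p; cases q; cases r) (simp add: xor.assoc)
lemma px_comm: "px p q = px q p"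
  by (cases p; cases q) (simp add: xor.commute)
lemma px_self [simp]: "px p p = (0,0,0)"
  by (cases p) simp
lemma px_zero [simp]: "px p (0,0,0) = p" "px (0,0,0) p = p"
  by (cases p; simp)+
lemma px_cancel [simp]: "px p (px p q) = q"
  by (metis px_assoc px_self px_zero(2))
lemma px_cancel2 [simp]: "px (px q p) p = q"
  by (metis px_assoc px_self px_zero(1))
lemma xor_same_iff [simp]: "((x::nat) XOR y = x) = (y = 0)" "(x = x XOR y) = (y = 0)"
  by (metis xor_eq_cancel xor.right_neutral)+
lemma px_inj [simp]: "(px p q = px p r) = (q = r)"
  by (metis px_cancel)
lemma sm_zero [simp]: "sm e 0 = (0,0,0)" "sm z0 g = (0,0,0)"
  by (cases e; simp)+
lemma sm_xor: "sm e (g XOR h) = px (sm e g) (sm e h)"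
  by (cases e) simp
lemma sm_inj: "e \<noteq> z0 \<Longrightarrow> (sm e g = sm e h) = (g = h)"
  by (cases e) auto
lemma sm_pxor: "sm (pxor f e) d = px (sm f d) (sm e d)"
  by (cases e; cases f) simp
lemma sm_eq_zero: "f \<noteq> z0 \<Longrightarrow> sm f x = (0,0,0) \<Longrightarrow> x = 0"
  by (cases f) (auto split: if_splits)
lemma sm_diff: "sm f x = sm e g \<Longrightarrow> f \<noteq> e \<Longrightarrow> f \<noteq> z0 \<Longrightarrow> x = 0"
  by (cases f; cases e) (auto split: if_splits)
lemma piw_px: "piw w (px p q) = piw w p XOR piw w q"
  by (cases w; cases p; cases q) (auto simp: ac_simps)
lemma piw_sm: "piw w (sm f d) = (if par f w then d else 0)"
  by (cases w; cases f) auto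

locale bc =
  fixes t n :: nat
  assumes hn: "n = 2 ^ t"
begin

definition V :: "pt set" where "V = {..<n} \<times> {..<n} \<times> {..<n}"
definition coset :: "pat \<Rightarrow> pt \<Rightarrow> pt set" where
  "coset e p = (\<lambda>g. px p (sm e g)) ` {..<n}"
definition plane :: "pat \<Rightarrow> nat \<Rightarrow> pt set" where
  "plane w v = {p \<in> V. piw w p = v}"

lemma n_pos: "n > 0" using hn by simp

lemma xlt: "x < n \<Longrightarrow> y < n \<Longrightarrow> x XOR y < n"
  using hn xor_lt by blast

lemma finite_V [simp]: "finite V" unfolding V_def by simp
lemma card_V: "card V = n^3"
  unfolding V_def by (simp add: card_cartesian_product power3_eq_cube)

lemma px_V: "p \<in> V \<Longrightarrow> q \<in> V \<Longrightarrow> px p q \<in> V"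
  unfolding V_def by (cases p; cases q) (auto simp: xlt)
lemma sm_V: "g < n \<Longrightarrow> sm e g \<in> V"
  unfolding V_def using n_pos by (cases e) auto
lemma piw_lt: "p \<in> V \<Longrightarrow> piw w p < n"
  unfolding V_def using n_pos by (cases w; cases p) (auto simp: xlt)

lemma coset_V: "p \<in> V \<Longrightarrow> coset e p \<subseteq> V"
  unfolding coset_def by (auto intro!: px_V sm_V)
lemma coset_self: "p \<in> coset e p"
  unfolding coset_def using n_pos by (auto intro!: image_eqI[of _ _ 0])
lemma coset_mem: "q \<in> coset e p \<Longrightarrow> coset e q = coset e p"
proof -
  assume "q \<in> coset e p"
  then obtain g where g: "g < n" "q = px p (sm e g)" unfolding coset_def by auto
  have "x \<in> coset e p" if "x \<in> coset e q" for x
  proof -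
    from that obtain h where h: "h < n" "x = px q (sm e h)" unfolding coset_def by auto
    then have "x = px p (sm e (g XOR h))" using g by (simp add: sm_xor px_assoc)
    then show ?thesis unfolding coset_def using g h xlt by auto
  qed
  moreover have "x \<in> coset e q" if "x \<in> coset e p" for x
  proof -
    from that obtain h where h: "h < n" "x = px p (sm e h)" unfolding coset_def by auto
    then have "x = px q (sm e (g XOR h))" using g by (simp add: sm_xor px_assoc)
    then show ?thesis unfolding coset_def using g h xlt by auto
  qed
  ultimately show ?thesis by auto
qed
lemma coset_disj: "coset e p \<inter> coset e q \<noteq> {} \<Longrightarrow> coset e p = coset e q"
  using coset_mem by blast
lemma coset_sym: "x \<in> coset e y \<Longrightarrow> y \<in> coset e x"
  using coset_mem coset_self by blast
lemma finite_coset [simp]: "finite (coset e p)" unfolding coset_def by simp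
lemma card_coset: "e \<noteq> z0 \<Longrightarrow> card (coset e p) = n"
  unfolding coset_def by (subst card_image) (auto simp: inj_on_def sm_inj)

lemma cube_mem: "q \<in> cube p d \<longleftrightarrow> (\<exists>f. q = px p (sm f d))"
proof (cases p)
  case (fields a b c)
  show ?thesis
  proof
    assume "q \<in> cube p d"
    then obtain x y z where q: "q = (x,y,z)" "x \<in> {a, a XOR d}" "y \<in> {b, b XOR d}" "z \<in> {c, c XOR d}"
      using fields by (cases q) auto
    then have "q = px p (sm (x \<noteq> a, y \<noteq> b, z \<noteq> c) d)" using fields by auto
    then show "\<exists>f. q = px p (sm f d)" by blast
  next
    assume "\<exists>f. q = px p (sm f d)"
    then obtain f where "q = px p (sm f d)" by blast
    then show "q \<in> cube p d" using fields by (cases f) auto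
  qed
qed
lemma cube_base: "p \<in> cube p d"
  using cube_mem[of p p d] by (metis px_zero(1) sm_zero(2))
lemma cube_V: "p \<in> V \<Longrightarrow> d < n \<Longrightarrow> cube p d \<subseteq> V"
proof
  fix q assume "p \<in> V" "d < n" "q \<in> cube p d"
  then obtain f where "q = px p (sm f d)" using cube_mem by blast
  then show "q \<in> V" using \<open>p \<in> V\<close> \<open>d < n\<close> by (simp add: px_V sm_V)
qed
lemma finite_cube [simp]: "finite (cube p d)" by (cases p) simp
lemma card_cube: "card (cube p d) \<le> 8"
proof (cases p)
  case (fields a b c)
  have "card {a, a XOR d} \<le> 2" "card {b, b XOR d} \<le> 2" "card {c, c XOR d} \<le> 2"
    by (auto simp: card_insert_if)
  then have "card {a, a XOR d} * card {b, b XOR d} * card {c, c XOR d} \<le> 2*2*2"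
    by (intro mult_le_mono) auto
  then show ?thesis using fields by (simp only: cube.simps card_cartesian_product)
qed
lemma cube_rebase: "q \<in> cube p d \<Longrightarrow> cube q d = cube p d"
proof -
  assume "q \<in> cube p d"
  then obtain f where f: "q = px p (sm f d)" using cube_mem by blast
  have "x \<in> cube p d \<longleftrightarrow> x \<in> cube q d" for x
  proof
    assume "x \<in> cube p d"
    then obtain g where "x = px p (sm g d)" using cube_mem by blast
    then have "x = px q (sm (pxor f g) d)" using f by (simp add: sm_pxor px_assoc)
    then show "x \<in> cube q d" using cube_mem by blast
  next
    assume "x \<in> cube q d"
    then obtain g where "x = px q (sm g d)" using cube_mem by blast
    then have "x = px p (sm (pxor f g) d)" using f by (simp add: sm_pxor px_assoc)
    then show "x \<in> cube p d" using cube_mem by blast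
  qed
  then show ?thesis by auto
qed
lemma cube_d_unique: "cube p d = cube p' d' \<Longrightarrow> d = d'"
proof -
  assume h: "cube p d = cube p' d'"
  obtain a b c where p: "p = (a,b,c)" by (cases p) auto
  obtain a' b' c' where p': "p' = (a',b',c')" by (cases p') auto
  have "fst ` cube p d = {a, a XOR d}" using p by auto
  moreover have "fst ` cube p' d' = {a', a' XOR d'}" using p' by auto
  ultimately have e: "{a, a XOR d} = {a', a' XOR d'}" using h by simp
  then have "(a = a' \<and> a XOR d = a' XOR d') \<or> (a = a' XOR d' \<and> a XOR d = a')"
    by (auto simp: doubleton_eq_iff)
  then show "d = d'"
  proof
    assume "a = a' \<and> a XOR d = a' XOR d'" then show ?thesis using xor_eq_cancel by metis
  next
    assume h2: "a = a' XOR d' \<and> a XOR d = a'"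
    then have "d = a XOR a'" by (metis xor_cancel_left)
    also have "\<dots> = d'" using h2 by (metis xor_cancel_left xor.commute)
    finally show ?thesis .
  qed
qed

end

lemma heavy_count:
  fixes b :: real
  assumes "finite I" "finite P" "\<forall>i\<in>I. A i \<subseteq> P"
    and "\<forall>i\<in>I. \<forall>j\<in>I. i \<noteq> j \<longrightarrow> A i \<inter> A j = {}"
    and "\<forall>i\<in>I. real (card (U \<inter> A i)) > b"
  shows "real (card I) * b \<le> real (card (U \<inter> P))"
proof -
  have fin: "\<forall>i\<in>I. finite (U \<inter> A i)" using assms(2,3) by (meson finite_Int finite_subset)
  have "card (\<Union>i\<in>I. U \<inter> A i) = (\<Sum>i\<in>I. card (U \<inter> A i))"
    using assms(1,4) fin by (intro card_UN_disjoint) auto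
  moreover have "card (\<Union>i\<in>I. U \<inter> A i) \<le> card (U \<inter> P)"
    using assms(2,3) by (intro card_mono) auto
  ultimately have "(\<Sum>i\<in>I. card (U \<inter> A i)) \<le> card (U \<inter> P)" by simp
  then have "(\<Sum>i\<in>I. real (card (U \<inter> A i))) \<le> real (card (U \<inter> P))"
    by (metis of_nat_le_iff of_nat_sum)
  moreover have "real (card I) * b \<le> (\<Sum>i\<in>I. real (card (U \<inter> A i)))"
    using assms(5) sum_bounded_below[of I b "\<lambda>i. real (card (U \<inter> A i))"] by force
  ultimately show ?thesis by linarith
qed

lemma xor_solve_eq: "(a::nat) XOR X = v \<Longrightarrow> a' XOR X = v \<Longrightarrow> a = a'"
  by (metis xor_cancel_right)

lemma lowbit_self: "e \<noteq> z0 \<Longrightarrow> lowbit e e"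
  by (cases e) auto

context bc
begin

lemma plane_card: "w \<noteq> z0 \<Longrightarrow> card (plane w v) \<le> n^2"
proof -
  assume wz: "w \<noteq> z0"
  obtain w1 w2 w3 where w: "w = (w1,w2,w3)" by (cases w) auto
  have fin: "finite ({..<n} \<times> {..<n})" by simp
  have cn: "card ({..<n} \<times> {..<n}) = n^2" by (simp add: card_cartesian_product power2_eq_square)
  have "\<exists>f. inj_on f (plane w v) \<and> f ` plane w v \<subseteq> {..<n} \<times> {..<n}"
  proof (cases w1)
    case True
    have "inj_on (\<lambda>(a,b,c). (b,c)) (plane w v)"
      unfolding inj_on_def plane_def using True w by (auto intro: xor_solve_eq)
    moreover have "(\<lambda>(a,b,c). (b,c)) ` plane w v \<subseteq> {..<n} \<times> {..<n}"
      unfolding plane_def V_def by auto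
    ultimately show ?thesis by blast
  next
    case f1: False
    show ?thesis
    proof (cases w2)
      case True
      have "inj_on (\<lambda>(a,b,c). (a,c)) (plane w v)"
        unfolding inj_on_def plane_def using True f1 w by (auto intro: xor_solve_eq)
      moreover have "(\<lambda>(a,b,c). (a,c)) ` plane w v \<subseteq> {..<n} \<times> {..<n}"
        unfolding plane_def V_def by auto
      ultimately show ?thesis by blast
    next
      case False
      have "inj_on (\<lambda>(a,b,c). (a,b)) (plane w v)"
        unfolding inj_on_def plane_def using False f1 w wz by (auto split: if_splits)
      moreover have "(\<lambda>(a,b,c). (a,b)) ` plane w v \<subseteq> {..<n} \<times> {..<n}"
        unfolding plane_def V_def by auto
      ultimately show ?thesis by blast
    qed
  qed
  then obtain f where "inj_on f (plane w v)" "f ` plane w v \<subseteq> {..<n} \<times> {..<n}" by blast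
  then have "card (plane w v) \<le> card ({..<n} \<times> {..<n})" using fin by (rule card_inj_on_le)
  then show ?thesis using cn by simp
qed

lemma finite_plane [simp]: "finite (plane w v)" unfolding plane_def by simp

lemma coset_in_plane: "\<not> par e w \<Longrightarrow> y \<in> V \<Longrightarrow> coset e y \<subseteq> plane w (piw w y)"
  unfolding coset_def plane_def by (auto simp: px_V sm_V piw_px piw_sm)

end

locale core = bc +
  fixes C :: "pt set" and ok :: "pt set \<Rightarrow> bool" and \<alpha> \<kappa> \<theta> \<epsilon> :: real
  assumes CV: "C \<subseteq> V"
    and hC: "\<forall>e\<in>EE. \<forall>p\<in>V. real (card (C \<inter> coset e p)) \<le> \<kappa> * n"
    and hok: "\<forall>p\<in>C. real (card {d. d < n \<and> d \<noteq> 0 \<and> ok (cube p d)}) \<ge> \<alpha> * n"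
    and h\<epsilon>: "\<epsilon> * n \<ge> 3" and h\<theta>: "\<theta> > 0"
    and hineq: "\<alpha> * n - 21 * \<kappa> * n - 7 * \<epsilon> * n - (84 * \<kappa> / \<epsilon>) * n
                 - (21 * \<theta> / \<epsilon>) * n - (80 * \<kappa> / \<theta>) * n - 28 > 0"
    and Cne: "C \<noteq> {}"
begin

lemma finite_C [simp]: "finite C" using CV finite_V finite_subset by blast

lemma kn_ge1: "\<kappa> * n \<ge> 1"
proof -
  obtain c where c: "c \<in> C" using Cne by auto
  have "(True,False,False) \<in> EE" unfolding EE_def by simp
  then have "real (card (C \<inter> coset (True,False,False) c)) \<le> \<kappa> * n" using hC c CV by auto
  moreover have "card (C \<inter> coset (True,False,False) c) \<ge> 1"
  proof -
    have "c \<in> C \<inter> coset (True,False,False) c" using c coset_self by blast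
    then have "card (C \<inter> coset (True,False,False) c) > 0" by (subst card_gt_0_iff) auto
    then show ?thesis by simp
  qed
  ultimately show ?thesis by simp
qed

lemma alpha_lt1: "\<alpha> < 1"
proof -
  obtain c where c: "c \<in> C" using Cne by auto
  have "{d. d < n \<and> d \<noteq> 0 \<and> ok (cube c d)} \<subseteq> {..<n} - {0}" by auto
  then have "card {d. d < n \<and> d \<noteq> 0 \<and> ok (cube c d)} \<le> card ({..<n} - {0::nat})"
    by (intro card_mono) auto
  also have "\<dots> = n - 1" using n_pos by simp
  finally have "\<alpha> * n \<le> real (n - 1)" using hok c by (meson of_nat_le_iff order_trans)
  then have "\<alpha> * n < n" using n_pos by linarith
  then show ?thesis using n_pos by simp
qed

lemma C_card: "real (card C) \<le> \<kappa> * n^3"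
proof -
  let ?u = "(True,False,False)"
  have uE: "?u \<in> EE" unfolding EE_def by simp
  have "C \<subseteq> (\<Union>yz\<in>{..<n}\<times>{..<n}. C \<inter> coset ?u (0, fst yz, snd yz))"
  proof
    fix p assume p: "p \<in> C"
    obtain a b c where abc: "p = (a,b,c)" by (cases p) auto
    have "a < n" "b < n" "c < n" using p CV abc unfolding V_def by auto
    then have "p \<in> coset ?u (0,b,c)" unfolding coset_def abc by (auto intro!: image_eqI[of _ _ a])
    moreover have "(b,c) \<in> {..<n}\<times>{..<n}" using \<open>b < n\<close> \<open>c < n\<close> by simp
    ultimately show "p \<in> (\<Union>yz\<in>{..<n}\<times>{..<n}. C \<inter> coset ?u (0, fst yz, snd yz))"
      using p by (intro UN_I[of "(b,c)"]) auto
  qed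
  then have "card C \<le> card (\<Union>yz\<in>{..<n}\<times>{..<n}. C \<inter> coset ?u (0, fst yz, snd yz))"
    by (intro card_mono) auto
  also have "\<dots> \<le> (\<Sum>yz\<in>{..<n}\<times>{..<n}. card (C \<inter> coset ?u (0, fst yz, snd yz)))"
    by (rule card_UN_le) simp
  finally have "real (card C) \<le> real (\<Sum>yz\<in>{..<n}\<times>{..<n}. card (C \<inter> coset ?u (0, fst yz, snd yz)))"
    by (simp only: of_nat_le_iff)
  also have "\<dots> = (\<Sum>yz\<in>{..<n}\<times>{..<n}. real (card (C \<inter> coset ?u (0, fst yz, snd yz))))"
    by (simp only: of_nat_sum)
  also have "\<dots> \<le> real (card ({..<n}\<times>{..<n})) * (\<kappa> * n)"
  proof (rule sum_bounded_above)
    fix yz assume "yz \<in> {..<n}\<times>{..<n}"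
    then have "(0::nat, fst yz, snd yz) \<in> V" unfolding V_def using n_pos by auto
    then show "real (card (C \<inter> coset ?u (0, fst yz, snd yz))) \<le> \<kappa> * n" using hC uE by blast
  qed
  also have "\<dots> = \<kappa> * n^3" by (simp add: card_cartesian_product power3_eq_cube)
  finally show ?thesis .
qed

lemma plane_C: "w \<in> EE \<Longrightarrow> real (card (C \<inter> plane w v)) \<le> \<kappa> * n^2"
proof -
  assume wE: "w \<in> EE"
  then have "w \<noteq> z0" unfolding EE_def by simp
  from perp_exists[OF this] obtain e where e: "e \<noteq> z0" "\<not> par e w" by blast
  have eE: "e \<in> EE" using e unfolding EE_def by simp
  let ?P = "plane w v"
  have PV: "?P \<subseteq> V" unfolding plane_def by auto
  have sub: "\<And>y. y \<in> ?P \<Longrightarrow> coset e y \<subseteq> ?P"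
    using coset_in_plane[OF e(2)] unfolding plane_def by auto
  have "(\<Sum>y\<in>C \<inter> ?P. card (coset e y)) = (\<Sum>y\<in>C \<inter> ?P. \<Sum>x\<in>?P. if x \<in> coset e y then (1::nat) else 0)"
  proof (rule sum.cong[OF refl])
    fix y assume y: "y \<in> C \<inter> ?P"
    have "card (coset e y) = card {x \<in> ?P. x \<in> coset e y}"
      using sub[of y] y by (intro arg_cong[where f=card]) auto
    also have "\<dots> = (\<Sum>x\<in>?P. if x \<in> coset e y then 1 else 0)"
      by (simp add: sum.If_cases Int_def)
    finally show "card (coset e y) = (\<Sum>x\<in>?P. if x \<in> coset e y then 1 else 0)" .
  qed
  also have "\<dots> = (\<Sum>x\<in>?P. \<Sum>y\<in>C \<inter> ?P. if x \<in> coset e y then (1::nat) else 0)"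
    by (rule sum.swap)
  also have "\<dots> = (\<Sum>x\<in>?P. card {y \<in> C \<inter> ?P. x \<in> coset e y})"
    by (rule sum.cong[OF refl]) (simp add: sum.If_cases Int_def)
  also have "\<dots> \<le> (\<Sum>x\<in>?P. card (C \<inter> coset e x))"
    by (intro sum_mono card_mono) (auto intro: coset_sym)
  finally have "(\<Sum>y\<in>C \<inter> ?P. card (coset e y)) \<le> (\<Sum>x\<in>?P. card (C \<inter> coset e x))" .
  then have "real (\<Sum>y\<in>C \<inter> ?P. card (coset e y)) \<le> real (\<Sum>x\<in>?P. card (C \<inter> coset e x))"
    by (simp only: of_nat_le_iff)
  then have A: "real (\<Sum>y\<in>C \<inter> ?P. card (coset e y)) \<le> (\<Sum>x\<in>?P. real (card (C \<inter> coset e x)))"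
    by (simp only: of_nat_sum)
  have "(\<Sum>y\<in>C \<inter> ?P. card (coset e y)) = card (C \<inter> ?P) * n"
    using card_coset[OF e(1)] by simp
  then have "real (card (C \<inter> ?P)) * n \<le> (\<Sum>x\<in>?P. real (card (C \<inter> coset e x)))"
    using A by simp
  also have "\<dots> \<le> real (card ?P) * (\<kappa> * n)"
    using hC eE PV by (intro sum_bounded_above) auto
  also have "\<dots> \<le> real (n^2) * (\<kappa> * n)"
  proof (rule mult_right_mono)
    show "real (card ?P) \<le> real (n^2)" using plane_card wE unfolding EE_def by (metis of_nat_le_iff mem_Collect_eq)
    show "0 \<le> \<kappa> * n" using kn_ge1 by simp
  qed
  finally have "real (card (C \<inter> ?P)) * n \<le> (\<kappa> * n^2) * n" by (simp add: algebra_simps)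
  then show ?thesis using n_pos by simp
qed

end

lemma lin_aux:
  fixes b1 b2 b3 x1 x2 x3 y K E A :: real
  shows "b2 \<le> 21*(x3 + y + 8*x1) \<Longrightarrow> b3 \<le> 7*(8*x2) \<Longrightarrow> y \<le> 8/3 \<Longrightarrow> x2 \<ge> 21*x1 \<Longrightarrow>
    x1 \<ge> 7*K \<Longrightarrow> b1 \<le> 7*(E + 8 + 8*K) \<Longrightarrow> 0 < A - 21*K - 7*E - 84*x1 - 21*x3 - 80*x2 - 28 \<Longrightarrow>
    K \<ge> 1 \<Longrightarrow> b1 + b2 + b3 < A"
  by argo

lemma arith_final:
  fixes N \<alpha> \<kappa> \<theta> \<epsilon> b1 b2 b3 :: real
  assumes N: "N > 0" and e3: "\<epsilon>*N \<ge> 3" and th: "\<theta> > 0" and K1: "\<kappa>*N \<ge> 1" and a1: "\<alpha> < 1"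
    and ineq: "\<alpha>*N - 21*\<kappa>*N - 7*\<epsilon>*N - (84*\<kappa>/\<epsilon>)*N - (21*\<theta>/\<epsilon>)*N - (80*\<kappa>/\<theta>)*N - 28 > 0"
    and B1: "b1 \<le> 7*(\<epsilon>*N + 8 + 8*(\<kappa>*N))"
    and B2: "b2 \<le> 21*((\<theta>*N^2 + 8 + 8*(\<kappa>*N^2))/(\<epsilon>*N))"
    and B3: "b3 \<le> 7*((8*(\<kappa>*N^3))/(\<theta>*N^2))"
  shows "b1 + b2 + b3 < \<alpha>*N"
proof -
  have ep: "\<epsilon> > 0" using e3 N by (metis linorder_not_le mult_nonpos_nonneg less_le not_numeral_le_zero order.trans)
  define K where "K = \<kappa>*N"
  define x1 where "x1 = K/\<epsilon>"
  define x2 where "x2 = K/\<theta>"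
  define x3 where "x3 = \<theta>*N/\<epsilon>"
  have K0: "K \<ge> 1" using K1 K_def by simp
  have x1: "x1 \<ge> 0" using K0 ep x1_def by simp
  have x2: "x2 \<ge> 0" using K0 th x2_def by simp
  have x3: "x3 \<ge> 0" using N ep th x3_def by simp
  have i2: "\<alpha>*N - 21*K - 7*(\<epsilon>*N) - 84*x1 - 21*x3 - 80*x2 - 28 > 0"
    using ineq unfolding K_def x1_def x2_def x3_def by (simp add: algebra_simps)
  have "\<alpha>*N < N" using a1 N by simp
  then have "21*x3 < N" "7*(\<epsilon>*N) < N" using i2 K0 x1 x2 x3 ep N by (smt (verit) mult_pos_pos)+
  then have t1: "21*\<theta> < \<epsilon>" and t2: "7*\<epsilon> < 1"
    using N ep unfolding x3_def by (simp_all add: field_simps)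
  have "x2 \<ge> 21*x1"
  proof -
    have "21*\<theta>*K \<le> \<epsilon>*K" using t1 K0 by simp
    then show ?thesis unfolding x1_def x2_def using ep th by (simp add: field_simps)
  qed
  moreover have "x1 \<ge> 7*K"
  proof -
    have "7*\<epsilon>*K \<le> K" using t2 K0 by simp
    then show ?thesis unfolding x1_def using ep by (simp add: field_simps)
  qed
  moreover have "8/(\<epsilon>*N) \<le> 8/3" using e3 ep N by (simp add: divide_le_eq mult.commute)
  moreover have "(\<theta>*N^2 + 8 + 8*(\<kappa>*N^2))/(\<epsilon>*N) = x3 + 8/(\<epsilon>*N) + 8*x1"
    unfolding x3_def x1_def K_def using N ep by (simp add: field_simps power2_eq_square)
  moreover have "(8*(\<kappa>*N^3))/(\<theta>*N^2) = 8*x2"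
    unfolding x2_def K_def using N th by (simp add: field_simps power2_eq_square power3_eq_cube)
  ultimately have "b2 \<le> 21*(x3 + 8/(\<epsilon>*N) + 8*x1)" "b3 \<le> 7*(8*x2)" "8/(\<epsilon>*N) \<le> 8/3"
    "x2 \<ge> 21*x1" "x1 \<ge> 7*K"
    using B2 B3 by (simp_all add: K_def)
  moreover have "b1 \<le> 7*(\<epsilon>*N + 8 + 8*K)" using B1 K_def by simp
  moreover have "0 < \<alpha>*N - 21*K - 7*(\<epsilon>*N) - 84*x1 - 21*x3 - 80*x2 - 28" using i2 .
  ultimately show ?thesis using K0 by (rule lin_aux)
qed

context core
begin

definition good :: "pt set \<Rightarrow> bool" where
  "good Q \<longleftrightarrow> (\<exists>p\<in>V. \<exists>d<n. d \<noteq> 0 \<and> Q = cube p d \<and> ok Q)"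
definition disj :: "pt set set \<Rightarrow> bool" where
  "disj F \<longleftrightarrow> (\<forall>Q1\<in>F. \<forall>Q2\<in>F. Q1 \<noteq> Q2 \<longrightarrow> Q1 \<inter> Q2 = {})"
definition NN :: "pt set set \<Rightarrow> pt set \<Rightarrow> nat" where
  "NN F Y = card {Q\<in>F. Q \<inter> Y \<inter> C \<noteq> {}}"
definition Inv :: "pt set set \<Rightarrow> bool" where
  "Inv F \<longleftrightarrow> (\<forall>e\<in>EE. \<forall>p\<in>V. real (card (\<Union>F \<inter> coset e p)) \<le> \<epsilon>*n + 8 + 8*real (NN F (coset e p))) \<and>
      (\<forall>w\<in>EE. \<forall>v. real (card (\<Union>F \<inter> plane w v)) \<le> \<theta>*n^2 + 8 + 8*real (NN F (plane w v)))"

lemma good_cube: "good Q \<Longrightarrow> Q \<subseteq> V \<and> card Q \<le> 8 \<and> finite Q"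
  unfolding good_def using cube_V card_cube by auto

lemma NN_le: "finite F \<Longrightarrow> disj F \<Longrightarrow> NN F Y \<le> card (Y \<inter> C)"
proof -
  assume fF: "finite F" and dF: "disj F"
  let ?S = "{Q\<in>F. Q \<inter> Y \<inter> C \<noteq> {}}"
  let ?g = "\<lambda>Q. SOME x. x \<in> Q \<inter> Y \<inter> C"
  have g: "?g Q \<in> Q \<inter> Y \<inter> C" if "Q \<in> ?S" for Q
  proof -
    have "\<exists>x. x \<in> Q \<inter> Y \<inter> C" using that by blast
    then show ?thesis by (rule someI_ex)
  qed
  have "inj_on ?g ?S"
  proof (rule inj_onI)
    fix Q1 Q2 assume a: "Q1 \<in> ?S" "Q2 \<in> ?S" "?g Q1 = ?g Q2"
    then have "Q1 \<inter> Q2 \<noteq> {}" using g[of Q1] g[of Q2] by auto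
    then show "Q1 = Q2" using dF a unfolding disj_def by blast
  qed
  moreover have "?g ` ?S \<subseteq> Y \<inter> C" using g by blast
  moreover have "finite (Y \<inter> C)" by simp
  ultimately show ?thesis unfolding NN_def by (rule card_inj_on_le)
qed

lemma inv_upd:
  fixes T :: real
  assumes fF: "finite F" and fin: "\<forall>Q'\<in>F. finite Q'" and QF: "Q \<notin> F" and fQ: "finite Q" and cQ: "card Q \<le> 8"
    and old: "real (card (\<Union>F \<inter> Y)) \<le> T + 8 + 8 * real (NN F Y)"
    and cond: "Q \<inter> Y \<noteq> {} \<Longrightarrow> Q \<inter> Y \<inter> C = {} \<Longrightarrow> real (card (\<Union>F \<inter> Y)) \<le> T"
  shows "real (card (\<Union>(insert Q F) \<inter> Y)) \<le> T + 8 + 8 * real (NN (insert Q F) Y)"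
proof -
  have fU: "finite (\<Union>F)" using fF fin by blast
  have "\<Union>(insert Q F) \<inter> Y = (Q \<inter> Y) \<union> (\<Union>F \<inter> Y)" by auto
  then have c1: "card (\<Union>(insert Q F) \<inter> Y) \<le> card (Q \<inter> Y) + card (\<Union>F \<inter> Y)"
    using card_Un_le[of "Q \<inter> Y" "\<Union>F \<inter> Y"] by simp
  have "card (Q \<inter> Y) \<le> card Q" using fQ by (intro card_mono) auto
  then have cQY: "card (Q \<inter> Y) \<le> 8" using cQ by linarith
  have mono: "NN F Y \<le> NN (insert Q F) Y"
    unfolding NN_def using fF by (intro card_mono) auto
  show ?thesis
  proof (cases "Q \<inter> Y = {}")
    case True
    then have "\<Union>(insert Q F) \<inter> Y = \<Union>F \<inter> Y" by auto
    then show ?thesis using old mono by simp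
  next
    case ne: False
    show ?thesis
    proof (cases "Q \<inter> Y \<inter> C = {}")
      case True
      then have "real (card (\<Union>F \<inter> Y)) \<le> T" using cond ne by blast
      then show ?thesis using c1 cQY by simp
    next
      case False
      then have "{Q'\<in>insert Q F. Q' \<inter> Y \<inter> C \<noteq> {}} = insert Q {Q'\<in>F. Q' \<inter> Y \<inter> C \<noteq> {}}" by auto
      then have "NN (insert Q F) Y = NN F Y + 1" unfolding NN_def using QF fF by simp
      then show ?thesis using c1 cQY old by simp
    qed
  qed
qed

end

context core
begin

definition state :: "pt set set \<Rightarrow> bool" where
  "state F \<longleftrightarrow> finite F \<and> disj F \<and> (\<forall>Q\<in>F. good Q) \<and> Inv F \<and> card F \<le> card C"

lemma state_U: "state F \<Longrightarrow> finite (\<Union>F) \<and> \<Union>F \<subseteq> V"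
  unfolding state_def using good_cube by blast

lemma state_Ucard: "state F \<Longrightarrow> real (card (\<Union>F)) \<le> 8*(\<kappa>*n^3)"
proof -
  assume st: "state F"
  then have fF: "finite F" and gF: "\<forall>Q\<in>F. good Q" and cF: "card F \<le> card C" unfolding state_def by auto
  have "card (\<Union>F) \<le> sum card F" by (rule card_Union_le_sum_card)
  also have "\<dots> \<le> card F * 8" using gF good_cube sum_bounded_above[of F card 8] by force
  also have "\<dots> \<le> card C * 8" using cF by simp
  finally have "real (card (\<Union>F)) \<le> real (card C) * 8" by (metis of_nat_le_iff of_nat_mult of_nat_numeral)
  then show ?thesis using C_card by linarith
qed

lemma state_coset: "state F \<Longrightarrow> e \<in> EE \<Longrightarrow> p \<in> V \<Longrightarrow>
   real (card (\<Union>F \<inter> coset e p)) \<le> \<epsilon>*n + 8 + 8*(\<kappa>*n)"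
proof -
  assume st: "state F" and e: "e \<in> EE" and p: "p \<in> V"
  then have "real (card (\<Union>F \<inter> coset e p)) \<le> \<epsilon>*n + 8 + 8*real (NN F (coset e p))"
    unfolding state_def Inv_def by blast
  moreover have "NN F (coset e p) \<le> card (coset e p \<inter> C)"
    using st NN_le unfolding state_def by blast
  moreover have "real (card (C \<inter> coset e p)) \<le> \<kappa>*n" using hC e p by blast
  ultimately show ?thesis by (simp add: Int_commute)
qed

lemma state_plane: "state F \<Longrightarrow> w \<in> EE \<Longrightarrow>
   real (card (\<Union>F \<inter> plane w v)) \<le> \<theta>*n^2 + 8 + 8*(\<kappa>*n^2)"
proof -
  assume st: "state F" and w: "w \<in> EE"
  then have "real (card (\<Union>F \<inter> plane w v)) \<le> \<theta>*n^2 + 8 + 8*real (NN F (plane w v))"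
    unfolding state_def Inv_def by blast
  moreover have "NN F (plane w v) \<le> card (plane w v \<inter> C)"
    using st NN_le unfolding state_def by blast
  moreover have "real (card (C \<inter> plane w v)) \<le> \<kappa>*n^2" using plane_C w by blast
  ultimately show ?thesis by (simp add: Int_commute)
qed

lemma EE_nz: "e \<in> EE \<longleftrightarrow> e \<noteq> z0" unfolding EE_def by simp

lemma b1_bound:
  assumes st: "state F" and c: "c \<in> C" "c \<notin> \<Union>F"
  shows "real (card {d. d < n \<and> cube c d \<inter> \<Union>F \<noteq> {}}) \<le> 7*(\<epsilon>*n + 8 + 8*(\<kappa>*n))"
proof -
  let ?U = "\<Union>F"
  have cV: "c \<in> V" using c CV by blast
  have fU: "finite ?U" using state_U st by blast
  have sub: "{d. d < n \<and> cube c d \<inter> ?U \<noteq> {}} \<subseteq> (\<Union>f\<in>EE. {d. d < n \<and> px c (sm f d) \<in> ?U})"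
  proof
    fix d assume "d \<in> {d. d < n \<and> cube c d \<inter> ?U \<noteq> {}}"
    then obtain q where d: "d < n" "q \<in> cube c d" "q \<in> ?U" by blast
    then obtain f where q: "q = px c (sm f d)" using cube_mem by blast
    have "f \<noteq> z0" using q d c by auto
    then show "d \<in> (\<Union>f\<in>EE. {d. d < n \<and> px c (sm f d) \<in> ?U})" using d q EE_nz by blast
  qed
  have each: "real (card {d. d < n \<and> px c (sm f d) \<in> ?U}) \<le> \<epsilon>*n + 8 + 8*(\<kappa>*n)" if f: "f \<in> EE" for f
  proof -
    have "inj_on (\<lambda>d. px c (sm f d)) {d. d < n \<and> px c (sm f d) \<in> ?U}"
      using f by (auto simp: inj_on_def sm_inj EE_nz)
    moreover have "(\<lambda>d. px c (sm f d)) ` {d. d < n \<and> px c (sm f d) \<in> ?U} \<subseteq> ?U \<inter> coset f c"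
      unfolding coset_def by auto
    moreover have "finite (?U \<inter> coset f c)" using fU by simp
    ultimately have "card {d. d < n \<and> px c (sm f d) \<in> ?U} \<le> card (?U \<inter> coset f c)"
      by (rule card_inj_on_le)
    then show ?thesis using state_coset[OF st f cV] by linarith
  qed
  have "card {d. d < n \<and> cube c d \<inter> ?U \<noteq> {}} \<le> card (\<Union>f\<in>EE. {d. d < n \<and> px c (sm f d) \<in> ?U})"
    using sub by (intro card_mono) auto
  also have "\<dots> \<le> (\<Sum>f\<in>EE. card {d. d < n \<and> px c (sm f d) \<in> ?U})"
    by (rule card_UN_le) simp
  finally have "real (card {d. d < n \<and> cube c d \<inter> ?U \<noteq> {}}) \<le> real (\<Sum>f\<in>EE. card {d. d < n \<and> px c (sm f d) \<in> ?U})"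
    by (simp only: of_nat_le_iff)
  also have "\<dots> = (\<Sum>f\<in>EE. real (card {d. d < n \<and> px c (sm f d) \<in> ?U}))"
    by (simp only: of_nat_sum)
  also have "\<dots> \<le> real (card EE) * (\<epsilon>*n + 8 + 8*(\<kappa>*n))"
    using each by (rule sum_bounded_above)
  finally show ?thesis by (simp add: card_EE)
qed

definition B2ef :: "pt set set \<Rightarrow> pt \<Rightarrow> pat \<Rightarrow> pat \<Rightarrow> nat set" where
  "B2ef F c e f = {d. d < n \<and> real (card (\<Union>F \<inter> coset e (px c (sm f d)))) > \<epsilon>*n}"
definition B2 :: "pt set set \<Rightarrow> pt \<Rightarrow> nat set" where
  "B2 F c = {d. d < n \<and> (\<exists>e\<in>EE. \<exists>f. px c (sm f d) \<notin> coset e c \<and>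
       real (card (\<Union>F \<inter> coset e (px c (sm f d)))) > \<epsilon>*n)}"
definition HP :: "pt set set \<Rightarrow> pat \<Rightarrow> nat set" where
  "HP F w = {v. v < n \<and> real (card (\<Union>F \<inter> plane w v)) > \<theta>*n^2}"
definition B3 :: "pt set set \<Rightarrow> pt \<Rightarrow> nat set" where
  "B3 F c = {d. d < n \<and> (\<exists>w\<in>EE. \<exists>f. piw w (px c (sm f d)) \<noteq> piw w c \<and>
       real (card (\<Union>F \<inter> plane w (piw w (px c (sm f d))))) > \<theta>*n^2)}"

lemma en_pos: "\<epsilon>*n > 0" using h\<epsilon> by linarith
lemma kappa_pos: "\<kappa> > 0"
proof -
  have "\<kappa> * n > 0" using kn_ge1 by linarith
  then show ?thesis using n_pos by (simp add: zero_less_mult_iff)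
qed

lemma b2ef_bound:
  assumes st: "state F" and cV: "c \<in> V" and e: "e \<in> EE" and f: "f \<in> RR e"
  shows "real (card (B2ef F c e f)) \<le> (\<theta>*n^2 + 8 + 8*(\<kappa>*n^2)) / (\<epsilon>*n)"
proof -
  have ez: "e \<noteq> z0" using e EE_nz by blast
  have fz: "f \<noteq> z0" and fe: "f \<noteq> e" using f lowbit_self[OF ez] unfolding RR_def by auto
  define w where "w = cross e f"
  have w: "w \<noteq> z0" "\<not> par e w" "\<not> par f w" using cross_prop[OF ez fz fe] w_def by auto
  have wE: "w \<in> EE" using w EE_nz by blast
  let ?P = "plane w (piw w c)"
  let ?A = "\<lambda>d. coset e (px c (sm f d))"
  have finI: "finite (B2ef F c e f)" unfolding B2ef_def by (rule finite_subset[of _ "{..<n}"]) auto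
  have AP: "\<forall>d\<in>B2ef F c e f. ?A d \<subseteq> ?P"
  proof
    fix d assume "d \<in> B2ef F c e f"
    then have d: "d < n" unfolding B2ef_def by simp
    have yV: "px c (sm f d) \<in> V" using cV d by (simp add: px_V sm_V)
    have "piw w (px c (sm f d)) = piw w c" using w by (simp add: piw_px piw_sm)
    then show "?A d \<subseteq> ?P" using coset_in_plane[OF w(2) yV] by simp
  qed
  have disj: "\<forall>d\<in>B2ef F c e f. \<forall>d'\<in>B2ef F c e f. d \<noteq> d' \<longrightarrow> ?A d \<inter> ?A d' = {}"
  proof (intro ballI impI)
    fix d d' assume "d \<in> B2ef F c e f" "d' \<in> B2ef F c e f" "d \<noteq> d'"
    show "?A d \<inter> ?A d' = {}"
    proof (rule ccontr)
      assume "?A d \<inter> ?A d' \<noteq> {}"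
      then have "?A d' = ?A d" using coset_disj by metis
      then have "px c (sm f d') \<in> ?A d" using coset_self by metis
      then obtain g where "px c (sm f d') = px (px c (sm f d)) (sm e g)" unfolding coset_def by auto
      then have "sm f d' = px (sm f d) (sm e g)" by (simp add: px_assoc)
      then have "px (sm f d) (sm f d') = sm e g" by simp
      then have "sm f (d XOR d') = sm e g" by (simp add: sm_xor)
      then have "d XOR d' = 0" using sm_diff fe fz by blast
      then show False using \<open>d \<noteq> d'\<close> by simp
    qed
  qed
  have heavy: "\<forall>d\<in>B2ef F c e f. real (card (\<Union>F \<inter> ?A d)) > \<epsilon>*n"
    unfolding B2ef_def by simp
  have "real (card (B2ef F c e f)) * (\<epsilon>*n) \<le> real (card (\<Union>F \<inter> ?P))"
    using heavy_count[OF finI finite_plane AP disj heavy] .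
  also have "\<dots> \<le> \<theta>*n^2 + 8 + 8*(\<kappa>*n^2)" using state_plane[OF st wE] .
  finally show ?thesis using en_pos by (simp add: pos_le_divide_eq)
qed

lemma b2_bound:
  assumes st: "state F" and cV: "c \<in> V"
  shows "real (card (B2 F c)) \<le> 21 * ((\<theta>*n^2 + 8 + 8*(\<kappa>*n^2)) / (\<epsilon>*n))"
proof -
  let ?X = "(\<theta>*n^2 + 8 + 8*(\<kappa>*n^2)) / (\<epsilon>*n)"
  have X0: "?X \<ge> 0" using en_pos h\<theta> kappa_pos
    by (intro divide_nonneg_pos) (simp_all add: zero_le_mult_iff)
  have sub: "B2 F c \<subseteq> (\<Union>e\<in>EE. \<Union>f\<in>RR e. B2ef F c e f)"
  proof
    fix d assume "d \<in> B2 F c"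
    then obtain e f where d: "d < n" "e \<in> EE" "px c (sm f d) \<notin> coset e c"
      "real (card (\<Union>F \<inter> coset e (px c (sm f d)))) > \<epsilon>*n" unfolding B2_def by blast
    have ez: "e \<noteq> z0" using d EE_nz by blast
    have fz: "f \<noteq> z0" using d(3) coset_self by (metis px_zero(1) sm_zero(2))
    have fe: "f \<noteq> e" using d(1,3) unfolding coset_def by auto
    show "d \<in> (\<Union>e\<in>EE. \<Union>f\<in>RR e. B2ef F c e f)"
    proof (cases "f \<in> RR e")
      case True
      then show ?thesis using d unfolding B2ef_def by blast
    next
      case False
      then have f': "pxor f e \<in> RR e" using RR_rep[OF ez fz fe] by blast
      have "px c (sm (pxor f e) d) = px (px c (sm f d)) (sm e d)" by (simp add: sm_pxor px_assoc)
      then have "px c (sm (pxor f e) d) \<in> coset e (px c (sm f d))"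
        unfolding coset_def using d(1) by auto
      then have "coset e (px c (sm (pxor f e) d)) = coset e (px c (sm f d))" by (rule coset_mem)
      then have "d \<in> B2ef F c e (pxor f e)" using d unfolding B2ef_def by simp
      then show ?thesis using d(2) f' by blast
    qed
  qed
  have finB: "\<And>e f. finite (B2ef F c e f)" unfolding B2ef_def by (rule finite_subset[of _ "{..<n}"]) auto
  have "card (B2 F c) \<le> card (\<Union>e\<in>EE. \<Union>f\<in>RR e. B2ef F c e f)"
    using sub finB by (intro card_mono) auto
  also have "\<dots> \<le> (\<Sum>e\<in>EE. card (\<Union>f\<in>RR e. B2ef F c e f))"
    by (rule card_UN_le) simp
  also have "\<dots> \<le> (\<Sum>e\<in>EE. \<Sum>f\<in>RR e. card (B2ef F c e f))"
    by (intro sum_mono card_UN_le) simp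
  finally have "real (card (B2 F c)) \<le> real (\<Sum>e\<in>EE. \<Sum>f\<in>RR e. card (B2ef F c e f))"
    by (simp only: of_nat_le_iff)
  also have "\<dots> = (\<Sum>e\<in>EE. \<Sum>f\<in>RR e. real (card (B2ef F c e f)))"
    by (simp only: of_nat_sum)
  also have "\<dots> \<le> (\<Sum>e\<in>EE. 3 * ?X)"
  proof (rule sum_mono)
    fix e assume e: "e \<in> EE"
    have "(\<Sum>f\<in>RR e. real (card (B2ef F c e f))) \<le> real (card (RR e)) * ?X"
      using b2ef_bound[OF st cV e] by (intro sum_bounded_above) auto
    also have "\<dots> \<le> 3 * ?X" using card_RR[of e] X0 by (intro mult_right_mono) auto
    finally show "(\<Sum>f\<in>RR e. real (card (B2ef F c e f))) \<le> 3 * ?X" .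
  qed
  also have "\<dots> = 21 * ?X" by (simp add: card_EE)
  finally show ?thesis .
qed

lemma b3_bound:
  assumes st: "state F" and cV: "c \<in> V"
  shows "real (card (B3 F c)) \<le> 7 * ((8*(\<kappa>*n^3)) / (\<theta>*n^2))"
proof -
  let ?X = "(8*(\<kappa>*n^3)) / (\<theta>*n^2)"
  have tn: "\<theta>*n^2 > 0" using h\<theta> n_pos by simp
  have fU: "finite (\<Union>F)" and UV: "\<Union>F \<subseteq> V" using state_U[OF st] by auto
  have hp: "real (card (HP F w)) \<le> ?X" for w
  proof -
    have finI: "finite (HP F w)" unfolding HP_def by (rule finite_subset[of _ "{..<n}"]) auto
    have AP: "\<forall>v\<in>HP F w. plane w v \<subseteq> V" unfolding plane_def by auto
    have dj: "\<forall>v\<in>HP F w. \<forall>v'\<in>HP F w. v \<noteq> v' \<longrightarrow> plane w v \<inter> plane w v' = {}"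
      unfolding plane_def by auto
    have hv: "\<forall>v\<in>HP F w. real (card (\<Union>F \<inter> plane w v)) > \<theta>*n^2" unfolding HP_def by simp
    have "real (card (HP F w)) * (\<theta>*n^2) \<le> real (card (\<Union>F \<inter> V))"
      using heavy_count[OF finI finite_V AP dj hv] .
    also have "\<dots> = real (card (\<Union>F))" using UV by (simp add: Int_absorb2)
    also have "\<dots> \<le> 8*(\<kappa>*n^3)" using state_Ucard[OF st] .
    finally show ?thesis using tn by (simp add: pos_le_divide_eq)
  qed
  have sub: "B3 F c \<subseteq> (\<Union>w\<in>EE. (\<lambda>v. piw w c XOR v) ` HP F w)"
  proof
    fix d assume "d \<in> B3 F c"
    then obtain w f where d: "d < n" "w \<in> EE" "piw w (px c (sm f d)) \<noteq> piw w c"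
      "real (card (\<Union>F \<inter> plane w (piw w (px c (sm f d))))) > \<theta>*n^2" unfolding B3_def by blast
    have pq: "piw w (px c (sm f d)) = piw w c XOR (if par f w then d else 0)" by (simp add: piw_px piw_sm)
    then have pf: "par f w" using d(3) by (cases "par f w") auto
    then have v: "piw w (px c (sm f d)) = piw w c XOR d" using pq by simp
    have "piw w c XOR d < n" using piw_lt[OF cV] d(1) xlt by blast
    then have "piw w c XOR d \<in> HP F w" using d(4) v unfolding HP_def by simp
    moreover have "d = piw w c XOR (piw w c XOR d)" by simp
    ultimately show "d \<in> (\<Union>w\<in>EE. (\<lambda>v. piw w c XOR v) ` HP F w)" using d(2) by blast
  qed
  have finH: "\<And>w. finite (HP F w)" unfolding HP_def by (rule finite_subset[of _ "{..<n}"]) auto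
  have "card (B3 F c) \<le> card (\<Union>w\<in>EE. (\<lambda>v. piw w c XOR v) ` HP F w)"
    using sub finH by (intro card_mono) auto
  also have "\<dots> \<le> (\<Sum>w\<in>EE. card ((\<lambda>v. piw w c XOR v) ` HP F w))"
    by (rule card_UN_le) simp
  also have "\<dots> \<le> (\<Sum>w\<in>EE. card (HP F w))"
    by (intro sum_mono card_image_le finH)
  finally have "real (card (B3 F c)) \<le> real (\<Sum>w\<in>EE. card (HP F w))"
    by (simp only: of_nat_le_iff)
  also have "\<dots> = (\<Sum>w\<in>EE. real (card (HP F w)))" by (simp only: of_nat_sum)
  also have "\<dots> \<le> real (card EE) * ?X" using hp by (intro sum_bounded_above)
  finally show ?thesis by (simp add: card_EE)
qed

end

context core
begin

lemma step:
  assumes st: "state F" and c: "c \<in> C" "c \<notin> \<Union>F"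
  shows "\<exists>d<n. d \<noteq> 0 \<and> ok (cube c d) \<and> cube c d \<inter> \<Union>F = {} \<and> Inv (insert (cube c d) F)"
proof -
  have cV: "c \<in> V" using c CV by blast
  let ?OK = "{d. d < n \<and> d \<noteq> 0 \<and> ok (cube c d)}"
  let ?B1 = "{d. d < n \<and> cube c d \<inter> \<Union>F \<noteq> {}}"
  have lt: "real (card ?B1) + real (card (B2 F c)) + real (card (B3 F c)) < \<alpha> * n"
    using arith_final[OF _ h\<epsilon> h\<theta> kn_ge1 alpha_lt1 hineq b1_bound[OF st c] b2_bound[OF st cV, unfolded of_nat_power] b3_bound[OF st cV, unfolded of_nat_power]]
      n_pos by simp
  have "\<exists>d\<in>?OK. d \<notin> ?B1 \<union> B2 F c \<union> B3 F c"
  proof (rule ccontr)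
    assume "\<not> ?thesis"
    then have "?OK \<subseteq> ?B1 \<union> B2 F c \<union> B3 F c" by blast
    moreover have "finite (?B1 \<union> B2 F c \<union> B3 F c)"
      unfolding B2_def B3_def by (rule finite_subset[of _ "{..<n}"]) auto
    ultimately have "card ?OK \<le> card (?B1 \<union> B2 F c \<union> B3 F c)" by (rule card_mono[rotated])
    also have "\<dots> \<le> card (?B1 \<union> B2 F c) + card (B3 F c)" by (rule card_Un_le)
    also have "\<dots> \<le> card ?B1 + card (B2 F c) + card (B3 F c)" using card_Un_le[of ?B1 "B2 F c"] by linarith
    finally have "real (card ?OK) \<le> real (card ?B1 + card (B2 F c) + card (B3 F c))"
      by (simp only: of_nat_le_iff)
    then have "real (card ?OK) \<le> real (card ?B1) + real (card (B2 F c)) + real (card (B3 F c))"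
      by simp
    moreover have "\<alpha> * n \<le> real (card ?OK)" using hok c by blast
    ultimately show False using lt by linarith
  qed
  then obtain d where d: "d < n" "d \<noteq> 0" "ok (cube c d)" "d \<notin> ?B1" "d \<notin> B2 F c" "d \<notin> B3 F c"
    by blast
  let ?Q = "cube c d"
  let ?U = "\<Union>F"
  have fF: "finite F" and gF: "\<forall>Q\<in>F. good Q" and IF: "Inv F" using st unfolding state_def by auto
  have finQ: "\<forall>Q'\<in>F. finite Q'" using gF good_cube by blast
  have dis: "?Q \<inter> ?U = {}" using d(1,4) by blast
  have QF: "?Q \<notin> F" using c(2) cube_base[of c d] by blast
  have cQ: "card ?Q \<le> 8" by (rule card_cube)
  have cinQ: "c \<in> ?Q" by (rule cube_base)
  have I1: "\<forall>e\<in>EE. \<forall>p\<in>V. real (card (\<Union>(insert ?Q F) \<inter> coset e p)) \<le> \<epsilon>*n + 8 + 8*real (NN (insert ?Q F) (coset e p))"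
  proof (intro ballI)
    fix e p assume e: "e \<in> EE" and p: "p \<in> V"
    have old: "real (card (?U \<inter> coset e p)) \<le> \<epsilon>*n + 8 + 8*real (NN F (coset e p))"
      using IF e p unfolding Inv_def by blast
    show "real (card (\<Union>(insert ?Q F) \<inter> coset e p)) \<le> \<epsilon>*n + 8 + 8*real (NN (insert ?Q F) (coset e p))"
    proof (rule inv_upd[OF fF finQ QF finite_cube cQ old])
      assume ne: "?Q \<inter> coset e p \<noteq> {}" and nc: "?Q \<inter> coset e p \<inter> C = {}"
      then obtain q where q: "q \<in> ?Q" "q \<in> coset e p" by blast
      then obtain f where qf: "q = px c (sm f d)" using cube_mem by blast
      have Y: "coset e q = coset e p" using q(2) by (rule coset_mem)
      have "q \<notin> coset e c"
      proof
        assume "q \<in> coset e c"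
        then have "coset e q = coset e c" by (rule coset_mem)
        then have "c \<in> coset e p" using Y coset_self[of c e] by simp
        then show False using nc cinQ c(1) by blast
      qed
      then have "\<not> (real (card (?U \<inter> coset e q)) > \<epsilon>*n)"
        using d(1,5) e qf unfolding B2_def by blast
      then show "real (card (?U \<inter> coset e p)) \<le> \<epsilon>*n" using Y by simp
    qed
  qed
  have I2: "\<forall>w\<in>EE. \<forall>v. real (card (\<Union>(insert ?Q F) \<inter> plane w v)) \<le> \<theta>*n^2 + 8 + 8*real (NN (insert ?Q F) (plane w v))"
  proof (intro ballI allI)
    fix w v assume w: "w \<in> EE"
    have old: "real (card (?U \<inter> plane w v)) \<le> \<theta>*n^2 + 8 + 8*real (NN F (plane w v))"
      using IF w unfolding Inv_def by blast
    show "real (card (\<Union>(insert ?Q F) \<inter> plane w v)) \<le> \<theta>*n^2 + 8 + 8*real (NN (insert ?Q F) (plane w v))"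
    proof (rule inv_upd[OF fF finQ QF finite_cube cQ old])
      assume ne: "?Q \<inter> plane w v \<noteq> {}" and nc: "?Q \<inter> plane w v \<inter> C = {}"
      then obtain q where q: "q \<in> ?Q" "q \<in> plane w v" by blast
      then obtain f where qf: "q = px c (sm f d)" using cube_mem by blast
      have v: "piw w q = v" using q(2) unfolding plane_def by simp
      have "c \<notin> plane w v" using nc cinQ c(1) by blast
      then have "piw w q \<noteq> piw w c" using v cV unfolding plane_def by auto
      then have "\<not> (real (card (?U \<inter> plane w (piw w q))) > \<theta>*n^2)"
        using d(1,6) w qf unfolding B3_def by blast
      then show "real (card (?U \<inter> plane w v)) \<le> \<theta>*n^2" using v by simp
    qed
  qed
  have "Inv (insert ?Q F)" unfolding Inv_def using I1 I2 by blast
  then show ?thesis using d dis by blast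
qed

lemma build: "finite D \<Longrightarrow> D \<subseteq> C \<Longrightarrow> \<exists>F. state F \<and> D \<subseteq> \<Union>F \<and> card F \<le> card D"
proof (induction D rule: finite_induct)
  case empty
  have "Inv {}" unfolding Inv_def NN_def using en_pos h\<theta> by simp
  then have "state {}" unfolding state_def disj_def by simp
  then show ?case by auto
next
  case (insert x D)
  then obtain F where F: "state F" "D \<subseteq> \<Union>F" "card F \<le> card D" by auto
  have cxD: "card (insert x D) = card D + 1" using insert by simp
  have cC: "card (insert x D) \<le> card C" using insert by (intro card_mono) auto
  show ?case
  proof (cases "x \<in> \<Union>F")
    case True
    then show ?thesis using F cxD by (intro exI[of _ F]) auto
  next
    case False
    have xC: "x \<in> C" using insert by blast
    from step[OF F(1) xC False] obtain d where d: "d < n" "d \<noteq> 0" "ok (cube x d)"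
      "cube x d \<inter> \<Union>F = {}" "Inv (insert (cube x d) F)" by blast
    let ?F = "insert (cube x d) F"
    have fF: "finite F" and dF: "disj F" and gF: "\<forall>Q\<in>F. good Q" using F(1) unfolding state_def by auto
    have QF: "cube x d \<notin> F" using False cube_base[of x d] by blast
    have "good (cube x d)" unfolding good_def using xC CV d by blast
    moreover have "disj ?F" using dF d(4) unfolding disj_def by blast
    moreover have "card ?F = card F + 1" using fF QF by simp
    ultimately have "state ?F" using fF gF d(5) F(3) cxD cC unfolding state_def by auto
    moreover have "insert x D \<subseteq> \<Union>?F" using F(2) cube_base[of x d] by blast
    moreover have "card ?F \<le> card (insert x D)" using fF QF F(3) cxD by simp
    ultimately show ?thesis by blast
  qed
qed

theorem core_main: "\<exists>F. (\<forall>Q\<in>F. good Q) \<and> disj F \<and> C \<subseteq> \<Union>F"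
  using build[OF finite_C subset_refl] unfolding state_def by blast

end

lemmas xor_ac = xor.assoc xor.commute xor.left_commute

lemma xor_image: "(b::nat) < 2^t \<Longrightarrow> (\<lambda>g. b XOR g) ` {..<2^t} = {..<2^t}"
proof
  assume b: "b < 2^t"
  show "(\<lambda>g. b XOR g) ` {..<2^t} \<subseteq> {..<2^t}" using b xor_lt by auto
  show "{..<2^t} \<subseteq> (\<lambda>g. b XOR g) ` {..<2^t}"
  proof
    fix y assume "y \<in> {..<(2::nat)^t}"
    then have "b XOR y \<in> {..<2^t}" "y = b XOR (b XOR y)" using b xor_lt by auto
    then show "y \<in> (\<lambda>g. b XOR g) ` {..<2^t}" by blast
  qed
qed

fun bsum :: "pt \<Rightarrow> nat" where "bsum (a,b,c) = (a XOR b) XOR c"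

lemma bsum_px: "bsum (px p q) = bsum p XOR bsum q"
  by (cases p; cases q) (simp add: xor_ac)

lemma bsum_sm_unit: "u \<in> {(True,False,False),(False,True,False),(False,False,True)} \<Longrightarrow> bsum (sm u g) = g"
  by auto

lemma bsum_sm: "bsum (sm f d) = 0 \<or> bsum (sm f d) = d"
  by (cases f) (auto simp: xor_ac)

locale tr = bc +
  fixes s1 s2 s3 \<tau> :: "nat \<Rightarrow> nat" and L :: "cell \<Rightarrow> nat"
  assumes b1: "bij_betw s1 {1..n} {1..n}" and b2: "bij_betw s2 {1..n} {1..n}"
    and b3: "bij_betw s3 {1..n} {1..n}" and bt: "bij_betw \<tau> {1..n} {1..n}"
    and Ldef: "\<forall>i \<in> {1..n}. \<forall>j \<in> {1..n}. \<forall>k \<in> {1..n}. L (i, j, k) = \<tau> (boolean_cube (s1 i, s2 j, s3 k))"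
begin

definition r1 :: "nat \<Rightarrow> nat" where "r1 a = inv_into {1..n} s1 (a + 1)"
definition r2 :: "nat \<Rightarrow> nat" where "r2 a = inv_into {1..n} s2 (a + 1)"
definition r3 :: "nat \<Rightarrow> nat" where "r3 a = inv_into {1..n} s3 (a + 1)"
definition psi :: "pt \<Rightarrow> cell" where "psi p = (r1 (fst p), r2 (fst (snd p)), r3 (snd (snd p)))"
definition phi :: "cell \<Rightarrow> pt" where "phi x = (s1 (fst x) - 1, s2 (fst (snd x)) - 1, s3 (snd (snd x)) - 1)"

lemma bij_facts:
  fixes s :: "nat \<Rightarrow> nat"
  assumes b: "bij_betw s {1..n} {1..n}"
  shows "\<And>a. a < n \<Longrightarrow> inv_into {1..n} s (a+1) \<in> {1..n}"
    and "\<And>a. a < n \<Longrightarrow> s (inv_into {1..n} s (a+1)) - 1 = a"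
    and "\<And>i. i \<in> {1..n} \<Longrightarrow> s i - 1 < n"
    and "\<And>i. i \<in> {1..n} \<Longrightarrow> inv_into {1..n} s (s i - 1 + 1) = i"
    and "\<And>a a'. a < n \<Longrightarrow> a' < n \<Longrightarrow> inv_into {1..n} s (a+1) = inv_into {1..n} s (a'+1) \<Longrightarrow> a = a'"
    and "\<And>i i'. i \<in> {1..n} \<Longrightarrow> i' \<in> {1..n} \<Longrightarrow> s i = s i' \<Longrightarrow> i = i'"
proof -
  have inj: "inj_on s {1..n}" and im: "s ` {1..n} = {1..n}"
    using bij_betw_imp_inj_on[OF b] bij_betw_imp_surj_on[OF b] by auto
  have mem: "a + 1 \<in> s ` {1..n}" if "a < n" for a using im that by simp
  have fi: "s (inv_into {1..n} s (a+1)) = a + 1" if "a < n" for a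
    using f_inv_into_f[OF mem[OF that]] .
  show "\<And>a. a < n \<Longrightarrow> inv_into {1..n} s (a+1) \<in> {1..n}"
    using mem by (rule inv_into_into)
  show "\<And>a. a < n \<Longrightarrow> s (inv_into {1..n} s (a+1)) - 1 = a"
    using fi by simp
  have sin: "s i \<in> {1..n}" if "i \<in> {1..n}" for i using im that by blast
  show "\<And>i. i \<in> {1..n} \<Longrightarrow> s i - 1 < n"
  proof -
    fix i assume "i \<in> {1..n}"
    then have "s i \<in> {1..n}" by (rule sin)
    then show "s i - 1 < n" by auto
  qed
  show "\<And>i. i \<in> {1..n} \<Longrightarrow> inv_into {1..n} s (s i - 1 + 1) = i"
  proof -
    fix i assume i: "i \<in> {1..n}"
    then have "s i \<in> {1..n}" by (rule sin)
    then have "s i - 1 + 1 = s i" by simp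
    then show "inv_into {1..n} s (s i - 1 + 1) = i" using inv_into_f_f[OF inj i] by simp
  qed
  show "\<And>a a'. a < n \<Longrightarrow> a' < n \<Longrightarrow> inv_into {1..n} s (a+1) = inv_into {1..n} s (a'+1) \<Longrightarrow> a = a'"
  proof -
    fix a a' assume "a < n" "a' < n" "inv_into {1..n} s (a+1) = inv_into {1..n} s (a'+1)"
    then have "s (inv_into {1..n} s (a+1)) = s (inv_into {1..n} s (a'+1))" by simp
    then show "a = a'" using fi \<open>a < n\<close> \<open>a' < n\<close> by simp
  qed
  show "\<And>i i'. i \<in> {1..n} \<Longrightarrow> i' \<in> {1..n} \<Longrightarrow> s i = s i' \<Longrightarrow> i = i'"
    using inj by (simp add: inj_on_eq_iff)
qed

lemma xor_rc: "(x::nat) XOR c = y XOR c \<Longrightarrow> x = y"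
  by (metis xor_cancel_right)
lemma xor_solve: "(a1::nat) XOR b1 = a2 XOR b2 \<Longrightarrow> b2 = b1 XOR (a1 XOR a2)"
proof -
  assume h: "a1 XOR b1 = a2 XOR b2"
  have "b2 = a2 XOR (a2 XOR b2)" by simp
  also have "\<dots> = a2 XOR (a1 XOR b1)" using h by simp
  finally show ?thesis by (simp add: xor_ac)
qed

lemma V_iff: "(a,b,c) \<in> V \<longleftrightarrow> a < n \<and> b < n \<and> c < n" unfolding V_def by simp

lemma r_facts:
  "a < n \<Longrightarrow> r1 a \<in> {1..n}" "a < n \<Longrightarrow> r2 a \<in> {1..n}" "a < n \<Longrightarrow> r3 a \<in> {1..n}"
  "a < n \<Longrightarrow> s1 (r1 a) - 1 = a" "a < n \<Longrightarrow> s2 (r2 a) - 1 = a" "a < n \<Longrightarrow> s3 (r3 a) - 1 = a"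
  "i \<in> {1..n} \<Longrightarrow> s1 i - 1 < n" "i \<in> {1..n} \<Longrightarrow> s2 i - 1 < n" "i \<in> {1..n} \<Longrightarrow> s3 i - 1 < n"
  "i \<in> {1..n} \<Longrightarrow> r1 (s1 i - 1) = i" "i \<in> {1..n} \<Longrightarrow> r2 (s2 i - 1) = i" "i \<in> {1..n} \<Longrightarrow> r3 (s3 i - 1) = i"
  "a < n \<Longrightarrow> a' < n \<Longrightarrow> r1 a = r1 a' \<Longrightarrow> a = a'"
  "a < n \<Longrightarrow> a' < n \<Longrightarrow> r2 a = r2 a' \<Longrightarrow> a = a'"
  "a < n \<Longrightarrow> a' < n \<Longrightarrow> r3 a = r3 a' \<Longrightarrow> a = a'"
  unfolding r1_def r2_def r3_def
  apply (erule bij_facts(1)[OF b1]) apply (erule bij_facts(1)[OF b2]) apply (erule bij_facts(1)[OF b3])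
  apply (erule bij_facts(2)[OF b1]) apply (erule bij_facts(2)[OF b2]) apply (erule bij_facts(2)[OF b3])
  apply (erule bij_facts(3)[OF b1]) apply (erule bij_facts(3)[OF b2]) apply (erule bij_facts(3)[OF b3])
  apply (erule bij_facts(4)[OF b1]) apply (erule bij_facts(4)[OF b2]) apply (erule bij_facts(4)[OF b3])
  apply (erule (2) bij_facts(5)[OF b1]) apply (erule (2) bij_facts(5)[OF b2]) apply (erule (2) bij_facts(5)[OF b3])
  done

lemma s_pos: "i \<in> {1..n} \<Longrightarrow> s1 i \<ge> 1 \<and> s2 i \<ge> 1 \<and> s3 i \<ge> 1"
proof -
  assume i: "i \<in> {1..n}"
  have "s1 ` {1..n} = {1..n}" "s2 ` {1..n} = {1..n}" "s3 ` {1..n} = {1..n}"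
    using bij_betw_imp_surj_on[OF b1] bij_betw_imp_surj_on[OF b2] bij_betw_imp_surj_on[OF b3] by auto
  then show ?thesis using i by (metis atLeastAtMost_iff image_eqI)
qed

lemma psi_cells: "p \<in> V \<Longrightarrow> psi p \<in> cells n"
proof -
  assume p: "p \<in> V"
  obtain a b c where abc: "p = (a,b,c)" by (cases p) auto
  then have "a < n" "b < n" "c < n" using p V_iff by auto
  then have "r1 a \<in> {1..n}" "r2 b \<in> {1..n}" "r3 c \<in> {1..n}" using r_facts(1-3) by auto
  then show ?thesis unfolding cells_def psi_def abc by simp
qed
lemma phi_V: "x \<in> cells n \<Longrightarrow> phi x \<in> V"
proof -
  assume x: "x \<in> cells n"
  obtain i j k where ijk: "x = (i,j,k)" by (cases x) auto
  then have "i \<in> {1..n}" "j \<in> {1..n}" "k \<in> {1..n}" using x cells_def by auto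
  then have "s1 i - 1 < n" "s2 j - 1 < n" "s3 k - 1 < n" using r_facts(7-9) by auto
  then show ?thesis unfolding V_def phi_def ijk by simp
qed
lemma psi_phi: "x \<in> cells n \<Longrightarrow> psi (phi x) = x"
proof -
  assume x: "x \<in> cells n"
  obtain i j k where ijk: "x = (i,j,k)" by (cases x) auto
  then have "i \<in> {1..n}" "j \<in> {1..n}" "k \<in> {1..n}" using x cells_def by auto
  then have "r1 (s1 i - 1) = i" "r2 (s2 j - 1) = j" "r3 (s3 k - 1) = k" using r_facts(10-12) by auto
  then show ?thesis unfolding psi_def phi_def ijk by simp
qed
lemma phi_psi: "p \<in> V \<Longrightarrow> phi (psi p) = p"
proof -
  assume p: "p \<in> V"
  obtain a b c where abc: "p = (a,b,c)" by (cases p) auto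
  then have "a < n" "b < n" "c < n" using p V_iff by auto
  then have "s1 (r1 a) - 1 = a" "s2 (r2 b) - 1 = b" "s3 (r3 c) - 1 = c" using r_facts(4-6) by auto
  then show ?thesis unfolding psi_def phi_def abc by simp
qed
lemma psi_inj: "inj_on psi V"
  by (metis inj_onI phi_psi)
lemma psi_img_V: "psi ` V = cells n"
proof
  show "psi ` V \<subseteq> cells n" using psi_cells by blast
  show "cells n \<subseteq> psi ` V" using phi_V psi_phi by (metis image_eqI subsetI)
qed

lemma bsum_lt: "p \<in> V \<Longrightarrow> bsum p < n"
  by (cases p) (auto simp: V_iff xlt)

lemma L_cell: "x \<in> cells n \<Longrightarrow> L x = \<tau> (bsum (phi x) + 1)"
proof -
  assume x: "x \<in> cells n"
  obtain i j k where ijk: "x = (i,j,k)" by (cases x) auto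
  then have i: "i \<in> {1..n}" "j \<in> {1..n}" "k \<in> {1..n}" using x unfolding cells_def by auto
  then show ?thesis using Ldef ijk unfolding boolean_cube_def phi_def by simp
qed

lemma L_psi: "p \<in> V \<Longrightarrow> L (psi p) = \<tau> (bsum p + 1)"
proof -
  assume p: "p \<in> V"
  have "L (psi p) = \<tau> (bsum (phi (psi p)) + 1)" by (rule L_cell[OF psi_cells[OF p]])
  then show ?thesis using phi_psi[OF p] by simp
qed

lemma tau_inj: "x < n \<Longrightarrow> y < n \<Longrightarrow> \<tau> (x+1) = \<tau> (y+1) \<Longrightarrow> x = y"
proof -
  assume "x < n" "y < n" "\<tau> (x+1) = \<tau> (y+1)"
  moreover have "inj_on \<tau> {1..n}" using bt bij_betw_imp_inj_on by blast
  moreover have "x + 1 \<in> {1..n}" "y + 1 \<in> {1..n}" using \<open>x < n\<close> \<open>y < n\<close> by auto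
  ultimately have "x + 1 = y + 1" using inj_onD by metis
  then show "x = y" by simp
qed
lemma tau_range: "x < n \<Longrightarrow> \<tau> (x+1) \<in> {1..n}"
proof -
  assume "x < n"
  then have "x + 1 \<in> {1..n}" by auto
  then have "\<tau> (x+1) \<in> \<tau> ` {1..n}" by (rule imageI)
  then show ?thesis using bij_betw_imp_surj_on[OF bt] by simp
qed

lemma L_eq: "p \<in> V \<Longrightarrow> q \<in> V \<Longrightarrow> (L (psi p) = L (psi q)) \<longleftrightarrow> bsum p = bsum q"
proof -
  assume p: "p \<in> V" and q: "q \<in> V"
  have "L (psi p) = L (psi q) \<longleftrightarrow> \<tau> (bsum p + 1) = \<tau> (bsum q + 1)" using L_psi p q by simp
  also have "\<dots> \<longleftrightarrow> bsum p = bsum q" using tau_inj[OF bsum_lt[OF p] bsum_lt[OF q]] by auto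
  finally show ?thesis .
qed

lemma bsum_cube: "q \<in> cube p d \<Longrightarrow> bsum q = bsum p \<or> bsum q = bsum p XOR d"
proof -
  assume "q \<in> cube p d"
  then obtain f where "q = px p (sm f d)" using cube_mem by blast
  then show ?thesis using bsum_sm[of f d] by (auto simp: bsum_px)
qed

lemma psi_cube: "psi ` cube (a,b,c) d = {r1 a, r1 (a XOR d)} \<times> {r2 b, r2 (b XOR d)} \<times> {r3 c, r3 (c XOR d)}"
  unfolding psi_def by auto

lemma xor_ids:
  "((a::nat) XOR d) XOR (b XOR d) = a XOR b"
  "(a XOR (b XOR d)) XOR (c XOR d) = (a XOR b) XOR c"
  "((a XOR d) XOR b) XOR (c XOR d) = (a XOR b) XOR c"
  "((a XOR d) XOR b) XOR c = (a XOR (b XOR d)) XOR c"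
  "(a XOR b) XOR (c XOR d) = (a XOR (b XOR d)) XOR c"
  "((a XOR d) XOR (b XOR d)) XOR (c XOR d) = (a XOR (b XOR d)) XOR c"
  by (simp_all add: xor_ac)

lemma TC1: "p \<in> V \<Longrightarrow> d < n \<Longrightarrow> d \<noteq> 0 \<Longrightarrow> psi ` cube p d \<in> three_cubes n L"
proof -
  assume p: "p \<in> V" and d: "d < n" "d \<noteq> 0"
  obtain a b c where abc: "p = (a,b,c)" by (cases p) auto
  have lt: "a < n" "b < n" "c < n" "a XOR d < n" "b XOR d < n" "c XOR d < n"
    using p abc d xlt by (auto simp: V_iff)
  have Lr: "L (r1 x, r2 y, r3 z) = \<tau> (((x XOR y) XOR z) + 1)" if "x < n" "y < n" "z < n" for x y z
    using L_psi[of "(x,y,z)"] that by (simp add: psi_def V_iff)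
  have ne: "r1 a \<noteq> r1 (a XOR d)" "r2 b \<noteq> r2 (b XOR d)" "r3 c \<noteq> r3 (c XOR d)"
  proof -
    have "a \<noteq> a XOR d" "b \<noteq> b XOR d" "c \<noteq> c XOR d" using d by auto
    then show "r1 a \<noteq> r1 (a XOR d)" "r2 b \<noteq> r2 (b XOR d)" "r3 c \<noteq> r3 (c XOR d)"
      using lt r_facts(13-15) by blast+
  qed
  have inr: "r1 a \<in> {1..n}" "r1 (a XOR d) \<in> {1..n}" "r2 b \<in> {1..n}" "r2 (b XOR d) \<in> {1..n}"
     "r3 c \<in> {1..n}" "r3 (c XOR d) \<in> {1..n}" using lt r_facts(1-3) by auto
  let ?x1 = "L (r1 a, r2 b, r3 c)" and ?x2 = "L (r1 a, r2 (b XOR d), r3 c)"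
  have eqs: "L (r1 (a XOR d), r2 (b XOR d), r3 c) = ?x1"
    "L (r1 a, r2 (b XOR d), r3 (c XOR d)) = ?x1"
    "L (r1 (a XOR d), r2 b, r3 (c XOR d)) = ?x1"
    "L (r1 (a XOR d), r2 b, r3 c) = ?x2"
    "L (r1 a, r2 b, r3 (c XOR d)) = ?x2"
    "L (r1 (a XOR d), r2 (b XOR d), r3 (c XOR d)) = ?x2"
    using lt by (simp_all add: Lr xor_ac)
  have S: "psi ` cube p d = {(x, y, z) | x y z. x \<in> {r1 a, r1 (a XOR d)} \<and> y \<in> {r2 b, r2 (b XOR d)} \<and> z \<in> {r3 c, r3 (c XOR d)}}"
    unfolding abc psi_cube by blast
  show ?thesis unfolding three_cubes_def
    apply (rule CollectI)
    apply (rule exI[of _ "r1 a"], rule exI[of _ "r1 (a XOR d)"], rule exI[of _ "r2 b"], rule exI[of _ "r2 (b XOR d)"])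
    apply (rule exI[of _ "r3 c"], rule exI[of _ "r3 (c XOR d)"])
    apply (rule exI[of _ ?x1], rule exI[of _ ?x2])
    using inr ne eqs S by blast
qed

lemma TC2: "S \<in> three_cubes n L \<Longrightarrow> \<exists>p\<in>V. \<exists>d<n. d \<noteq> 0 \<and> S = psi ` cube p d"
proof -
  assume "S \<in> three_cubes n L"
  then obtain i1 i2 j1 j2 k1 k2 x1 x2 where h:
      "i1 \<in> {1..n}" "i2 \<in> {1..n}" "j1 \<in> {1..n}" "j2 \<in> {1..n}" "k1 \<in> {1..n}" "k2 \<in> {1..n}"
      "i1 \<noteq> i2" "j1 \<noteq> j2" "k1 \<noteq> k2"
      "L (i1, j1, k1) = x1" "L (i2, j2, k1) = x1" "L (i1, j2, k2) = x1"
      "S = {(a, b, c) | a b c. a \<in> {i1, i2} \<and> b \<in> {j1, j2} \<and> c \<in> {k1, k2}}"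
    unfolding three_cubes_def by blast
  define a1 where "a1 = s1 i1 - 1"
  define a2 where "a2 = s1 i2 - 1"
  define b1' where "b1' = s2 j1 - 1"
  define b2' where "b2' = s2 j2 - 1"
  define c1 where "c1 = s3 k1 - 1"
  define c2 where "c2 = s3 k2 - 1"
  have lt: "a1 < n" "a2 < n" "b1' < n" "b2' < n" "c1 < n" "c2 < n"
    using h r_facts(7-9) unfolding a1_def a2_def b1'_def b2'_def c1_def c2_def by auto
  have rr: "i1 = r1 a1" "i2 = r1 a2" "j1 = r2 b1'" "j2 = r2 b2'" "k1 = r3 c1" "k2 = r3 c2"
    using h r_facts(10-12) unfolding a1_def a2_def b1'_def b2'_def c1_def c2_def by auto
  have Lr: "L (r1 x, r2 y, r3 z) = \<tau> (((x XOR y) XOR z) + 1)" if "x < n" "y < n" "z < n" for x y z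
    using L_psi[of "(x,y,z)"] that by (simp add: psi_def V_iff)
  have x3: "(x XOR y) XOR z < n" if "x < n" "y < n" "z < n" for x y z using that by (simp add: xlt)
  have "L (r1 a1, r2 b1', r3 c1) = L (r1 a2, r2 b2', r3 c1)" using h(10,11) rr by simp
  then have "\<tau> (((a1 XOR b1') XOR c1) + 1) = \<tau> (((a2 XOR b2') XOR c1) + 1)" using Lr lt by simp
  then have e1: "(a1 XOR b1') XOR c1 = (a2 XOR b2') XOR c1"
    by (rule tau_inj[OF x3[OF lt(1,3,5)] x3[OF lt(2,4,5)]])
  have "L (r1 a1, r2 b1', r3 c1) = L (r1 a1, r2 b2', r3 c2)" using h(10,12) rr by simp
  then have "\<tau> (((a1 XOR b1') XOR c1) + 1) = \<tau> (((a1 XOR b2') XOR c2) + 1)" using Lr lt by simp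
  then have e2: "(a1 XOR b1') XOR c1 = (a1 XOR b2') XOR c2"
    by (rule tau_inj[OF x3[OF lt(1,3,5)] x3[OF lt(1,4,6)]])
  define d where "d = a1 XOR a2"
  have dn: "d < n" using lt xlt d_def by simp
  have d0: "d \<noteq> 0" using h(7) rr d_def by auto
  have f1: "a1 XOR b1' = a2 XOR b2'" using e1 by (rule xor_rc)
  have a2e: "a2 = a1 XOR d" using d_def by simp
  have b2e: "b2' = b1' XOR d" using xor_solve[OF f1] d_def by simp
  have "b1' XOR c1 = b2' XOR c2" using e2 by (simp add: xor.assoc)
  then have "c2 = c1 XOR (b1' XOR b2')" by (rule xor_solve)
  moreover have "b1' XOR b2' = d" using b2e by simp
  ultimately have c2e: "c2 = c1 XOR d" by simp
  have "S = psi ` cube (a1,b1',c1) d"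
    unfolding h(13) psi_cube using rr a2e b2e c2e by auto
  moreover have "(a1,b1',c1) \<in> V" using lt by (simp add: V_iff)
  ultimately show ?thesis using dn d0 by blast
qed

lemma SW: "p \<in> V \<Longrightarrow> d < n \<Longrightarrow> d \<noteq> 0 \<Longrightarrow> q \<in> cube p d \<Longrightarrow>
    swap L (psi ` cube p d) (psi q) = \<tau> ((bsum q XOR d) + 1)"
proof -
  assume p: "p \<in> V" and d: "d < n" "d \<noteq> 0" and q: "q \<in> cube p d"
  have CV': "cube p d \<subseteq> V" using cube_V p d by blast
  have qV: "q \<in> V" using q CV' by blast
  have bq: "bsum q XOR d < n" using bsum_lt[OF qV] d xlt by blast
  let ?y = "\<tau> ((bsum q XOR d) + 1)"
  let ?P = "\<lambda>y. y \<in> L ` psi ` cube p d \<and> y \<noteq> L (psi q)"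
  have "?P ?y"
  proof
    let ?q2 = "px q (sm (True,False,False) d)"
    have "?q2 \<in> cube q d" using cube_mem by blast
    then have q2: "?q2 \<in> cube p d" using cube_rebase[OF q] by simp
    then have "L (psi ?q2) = \<tau> (bsum ?q2 + 1)" using CV' L_psi by blast
    also have "bsum ?q2 = bsum q XOR d" by (simp add: bsum_px)
    finally have "?y = L (psi ?q2)" by simp
    then show "?y \<in> L ` psi ` cube p d" using q2 by blast
    have "bsum q XOR d \<noteq> bsum q" using d by simp
    then have "\<tau> ((bsum q XOR d) + 1) \<noteq> \<tau> (bsum q + 1)" using tau_inj bq bsum_lt[OF qV] by blast
    then show "?y \<noteq> L (psi q)" using L_psi[OF qV] by simp
  qed
  moreover have "y = ?y" if "?P y" for y
  proof -
    from that obtain q' where q': "q' \<in> cube p d" "y = L (psi q')" "y \<noteq> L (psi q)" by blast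
    have q'V: "q' \<in> V" using q' CV' by blast
    have "bsum q' \<noteq> bsum q" using q' L_eq[OF q'V qV] by simp
    then have "bsum q' = bsum q XOR d" using bsum_cube[OF q] bsum_cube[OF q'(1)] by auto
    then show ?thesis using q' L_psi[OF q'V] by simp
  qed
  ultimately have "(THE y. ?P y) = ?y" by (rule the_equality)
  moreover have "psi q \<in> psi ` cube p d" using q by blast
  ultimately show ?thesis unfolding swap_def by simp
qed

end

context tr
begin

lemma coset_mem_iff: "q \<in> coset e p \<longleftrightarrow> (\<exists>g<n. q = px p (sm e g))"
  unfolding coset_def by auto

lemma psi_eq: "psi (a,b,c) = (r1 a, r2 b, r3 c)" unfolding psi_def by simp

lemma cell_repr: "x \<in> cells n \<Longrightarrow> \<exists>a b c. a < n \<and> b < n \<and> c < n \<and> x = psi (a,b,c)"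
  using phi_V psi_phi by (metis V_iff prod_cases3)

lemma line_row: "p \<in> V \<Longrightarrow> p = (a,b,c) \<Longrightarrow> psi ` coset (False,True,False) p = row n (r1 a) (r3 c)"
proof -
  assume p: "p \<in> V" and abc: "p = (a,b,c)"
  have lt: "a < n" "b < n" "c < n" using p abc V_iff by auto
  show ?thesis
  proof
    show "psi ` coset (False,True,False) p \<subseteq> row n (r1 a) (r3 c)"
    proof
      fix x assume "x \<in> psi ` coset (False,True,False) p"
      then obtain g where g: "g < n" "x = psi (a, b XOR g, c)" unfolding coset_def abc by auto
      then have "r2 (b XOR g) \<in> {1..n}" using lt xlt r_facts(2) by blast
      then show "x \<in> row n (r1 a) (r3 c)" unfolding row_def g psi_eq by blast
    qed
    show "row n (r1 a) (r3 c) \<subseteq> psi ` coset (False,True,False) p"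
    proof
      fix x assume "x \<in> row n (r1 a) (r3 c)"
      then obtain j where j: "j \<in> {1..n}" "x = (r1 a, j, r3 c)" unfolding row_def by blast
      define y where "y = s2 j - 1"
      have y: "y < n" "r2 y = j" using j r_facts(8,11) y_def by auto
      have "b XOR (b XOR y) = y" by simp
      then have "x = psi (px p (sm (False,True,False) (b XOR y)))" using j y abc psi_eq by simp
      moreover have "b XOR y < n" using lt y xlt by blast
      ultimately show "x \<in> psi ` coset (False,True,False) p" unfolding coset_def by blast
    qed
  qed
qed

lemma line_col: "p \<in> V \<Longrightarrow> p = (a,b,c) \<Longrightarrow> psi ` coset (True,False,False) p = col n (r2 b) (r3 c)"
proof -
  assume p: "p \<in> V" and abc: "p = (a,b,c)"
  have lt: "a < n" "b < n" "c < n" using p abc V_iff by auto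
  show ?thesis
  proof
    show "psi ` coset (True,False,False) p \<subseteq> col n (r2 b) (r3 c)"
    proof
      fix x assume "x \<in> psi ` coset (True,False,False) p"
      then obtain g where g: "g < n" "x = psi (a XOR g, b, c)" unfolding coset_def abc by auto
      then have "r1 (a XOR g) \<in> {1..n}" using lt xlt r_facts(1) by blast
      then show "x \<in> col n (r2 b) (r3 c)" unfolding col_def g psi_eq by blast
    qed
    show "col n (r2 b) (r3 c) \<subseteq> psi ` coset (True,False,False) p"
    proof
      fix x assume "x \<in> col n (r2 b) (r3 c)"
      then obtain i where i: "i \<in> {1..n}" "x = (i, r2 b, r3 c)" unfolding col_def by blast
      define y where "y = s1 i - 1"
      have y: "y < n" "r1 y = i" using i r_facts(7,10) y_def by auto
      have "a XOR (a XOR y) = y" by simp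
      then have "x = psi (px p (sm (True,False,False) (a XOR y)))" using i y abc psi_eq by simp
      moreover have "a XOR y < n" using lt y xlt by blast
      ultimately show "x \<in> psi ` coset (True,False,False) p" unfolding coset_def by blast
    qed
  qed
qed

lemma line_fil: "p \<in> V \<Longrightarrow> p = (a,b,c) \<Longrightarrow> psi ` coset (False,False,True) p = fil n (r1 a) (r2 b)"
proof -
  assume p: "p \<in> V" and abc: "p = (a,b,c)"
  have lt: "a < n" "b < n" "c < n" using p abc V_iff by auto
  show ?thesis
  proof
    show "psi ` coset (False,False,True) p \<subseteq> fil n (r1 a) (r2 b)"
    proof
      fix x assume "x \<in> psi ` coset (False,False,True) p"
      then obtain g where g: "g < n" "x = psi (a, b, c XOR g)" unfolding coset_def abc by auto
      then have "r3 (c XOR g) \<in> {1..n}" using lt xlt r_facts(3) by blast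
      then show "x \<in> fil n (r1 a) (r2 b)" unfolding fil_def g psi_eq by blast
    qed
    show "fil n (r1 a) (r2 b) \<subseteq> psi ` coset (False,False,True) p"
    proof
      fix x assume "x \<in> fil n (r1 a) (r2 b)"
      then obtain k where k: "k \<in> {1..n}" "x = (r1 a, r2 b, k)" unfolding fil_def by blast
      define y where "y = s3 k - 1"
      have y: "y < n" "r3 y = k" using k r_facts(9,12) y_def by auto
      have "c XOR (c XOR y) = y" by simp
      then have "x = psi (px p (sm (False,False,True) (c XOR y)))" using k y abc psi_eq by simp
      moreover have "c XOR y < n" using lt y xlt by blast
      ultimately show "x \<in> psi ` coset (False,False,True) p" unfolding coset_def by blast
    qed
  qed
qed

lemma sym_row: "p \<in> V \<Longrightarrow> p = (a,b,c) \<Longrightarrow>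
   psi ` coset (False,True,True) p = {x \<in> row_layer n (r1 a). L x = L (psi p)}"
proof -
  assume p: "p \<in> V" and abc: "p = (a,b,c)"
  have lt: "a < n" "b < n" "c < n" using p abc V_iff by auto
  show ?thesis
  proof
    show "psi ` coset (False,True,True) p \<subseteq> {x \<in> row_layer n (r1 a). L x = L (psi p)}"
    proof
      fix x assume "x \<in> psi ` coset (False,True,True) p"
      then obtain g where g: "g < n" "x = psi (a, b XOR g, c XOR g)" unfolding coset_def abc by auto
      have qV: "(a, b XOR g, c XOR g) \<in> V" using lt g xlt V_iff by simp
      have "r2 (b XOR g) \<in> {1..n}" "r3 (c XOR g) \<in> {1..n}" using lt g xlt r_facts(2,3) by blast+
      then have "x \<in> row_layer n (r1 a)" unfolding row_layer_def g psi_eq by blast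
      moreover have "L x = L (psi p)" unfolding g using L_eq[OF qV p] abc by (simp add: xor_ac)
      ultimately show "x \<in> {x \<in> row_layer n (r1 a). L x = L (psi p)}" by blast
    qed
    show "{x \<in> row_layer n (r1 a). L x = L (psi p)} \<subseteq> psi ` coset (False,True,True) p"
    proof
      fix x assume x: "x \<in> {x \<in> row_layer n (r1 a). L x = L (psi p)}"
      then obtain j k where jk: "j \<in> {1..n}" "k \<in> {1..n}" "x = (r1 a, j, k)" unfolding row_layer_def by blast
      define y where "y = s2 j - 1"
      define z where "z = s3 k - 1"
      have y: "y < n" "r2 y = j" using jk r_facts(8,11) y_def by auto
      have z: "z < n" "r3 z = k" using jk r_facts(9,12) z_def by auto
      have xq: "x = psi (a,y,z)" using jk y z psi_eq by simp
      have qV: "(a,y,z) \<in> V" using lt y z V_iff by simp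
      have "bsum (a,y,z) = bsum p" using x xq L_eq[OF qV p] by simp
      then have "(a XOR y) XOR z = (a XOR b) XOR c" using abc by simp
      then have "b XOR c = y XOR z" by (simp add: xor.assoc)
      then have ze: "z = c XOR (b XOR y)" by (rule xor_solve)
      have "x = psi (px p (sm (False,True,True) (b XOR y)))" using xq ze abc by simp
      moreover have "b XOR y < n" using lt y xlt by blast
      ultimately show "x \<in> psi ` coset (False,True,True) p" unfolding coset_def by blast
    qed
  qed
qed

lemma xor_h1: "((y::nat) XOR b) XOR z = (a XOR b) XOR c \<Longrightarrow> a XOR c = y XOR z"
proof -
  assume h: "(y XOR b) XOR z = (a XOR b) XOR c"
  have "(y XOR z) XOR b = (y XOR b) XOR z" by (simp add: xor_ac)
  also have "\<dots> = (a XOR b) XOR c" by (rule h)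
  also have "\<dots> = (a XOR c) XOR b" by (simp add: xor_ac)
  finally show ?thesis by (metis xor_rc)
qed

lemma sym_col: "p \<in> V \<Longrightarrow> p = (a,b,c) \<Longrightarrow>
   psi ` coset (True,False,True) p = {x \<in> col_layer n (r2 b). L x = L (psi p)}"
proof -
  assume p: "p \<in> V" and abc: "p = (a,b,c)"
  have lt: "a < n" "b < n" "c < n" using p abc V_iff by auto
  show ?thesis
  proof
    show "psi ` coset (True,False,True) p \<subseteq> {x \<in> col_layer n (r2 b). L x = L (psi p)}"
    proof
      fix x assume "x \<in> psi ` coset (True,False,True) p"
      then obtain g where g: "g < n" "x = psi (a XOR g, b, c XOR g)" unfolding coset_def abc by auto
      have qV: "(a XOR g, b, c XOR g) \<in> V" using lt g xlt V_iff by simp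
      have "r1 (a XOR g) \<in> {1..n}" "r3 (c XOR g) \<in> {1..n}" using lt g xlt r_facts(1,3) by blast+
      then have "x \<in> col_layer n (r2 b)" unfolding col_layer_def g psi_eq by blast
      moreover have "L x = L (psi p)" unfolding g using L_eq[OF qV p] abc by (simp add: xor_ac)
      ultimately show "x \<in> {x \<in> col_layer n (r2 b). L x = L (psi p)}" by blast
    qed
    show "{x \<in> col_layer n (r2 b). L x = L (psi p)} \<subseteq> psi ` coset (True,False,True) p"
    proof
      fix x assume x: "x \<in> {x \<in> col_layer n (r2 b). L x = L (psi p)}"
      then obtain i k where ik: "i \<in> {1..n}" "k \<in> {1..n}" "x = (i, r2 b, k)" unfolding col_layer_def by blast
      define y where "y = s1 i - 1"
      define z where "z = s3 k - 1"
      have y: "y < n" "r1 y = i" using ik r_facts(7,10) y_def by auto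
      have z: "z < n" "r3 z = k" using ik r_facts(9,12) z_def by auto
      have xq: "x = psi (y,b,z)" using ik y z psi_eq by simp
      have qV: "(y,b,z) \<in> V" using lt y z V_iff by simp
      have "bsum (y,b,z) = bsum p" using x xq L_eq[OF qV p] by simp
      then have "(y XOR b) XOR z = (a XOR b) XOR c" using abc by simp
      then have "a XOR c = y XOR z" by (rule xor_h1)
      then have ze: "z = c XOR (a XOR y)" by (rule xor_solve)
      have "x = psi (px p (sm (True,False,True) (a XOR y)))" using xq ze abc by simp
      moreover have "a XOR y < n" using lt y xlt by blast
      ultimately show "x \<in> psi ` coset (True,False,True) p" unfolding coset_def by blast
    qed
  qed
qed

lemma sym_fil: "p \<in> V \<Longrightarrow> p = (a,b,c) \<Longrightarrow>
   psi ` coset (True,True,False) p = {x \<in> file_layer n (r3 c). L x = L (psi p)}"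
proof -
  assume p: "p \<in> V" and abc: "p = (a,b,c)"
  have lt: "a < n" "b < n" "c < n" using p abc V_iff by auto
  show ?thesis
  proof
    show "psi ` coset (True,True,False) p \<subseteq> {x \<in> file_layer n (r3 c). L x = L (psi p)}"
    proof
      fix x assume "x \<in> psi ` coset (True,True,False) p"
      then obtain g where g: "g < n" "x = psi (a XOR g, b XOR g, c)" unfolding coset_def abc by auto
      have qV: "(a XOR g, b XOR g, c) \<in> V" using lt g xlt V_iff by simp
      have "r1 (a XOR g) \<in> {1..n}" "r2 (b XOR g) \<in> {1..n}" using lt g xlt r_facts(1,2) by blast+
      then have "x \<in> file_layer n (r3 c)" unfolding file_layer_def g psi_eq by blast
      moreover have "L x = L (psi p)" unfolding g using L_eq[OF qV p] abc by (simp add: xor_ac)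
      ultimately show "x \<in> {x \<in> file_layer n (r3 c). L x = L (psi p)}" by blast
    qed
    show "{x \<in> file_layer n (r3 c). L x = L (psi p)} \<subseteq> psi ` coset (True,True,False) p"
    proof
      fix x assume x: "x \<in> {x \<in> file_layer n (r3 c). L x = L (psi p)}"
      then obtain i j where ij: "i \<in> {1..n}" "j \<in> {1..n}" "x = (i, j, r3 c)" unfolding file_layer_def by blast
      define y where "y = s1 i - 1"
      define z where "z = s2 j - 1"
      have y: "y < n" "r1 y = i" using ij r_facts(7,10) y_def by auto
      have z: "z < n" "r2 z = j" using ij r_facts(8,11) z_def by auto
      have xq: "x = psi (y,z,c)" using ij y z psi_eq by simp
      have qV: "(y,z,c) \<in> V" using lt y z V_iff by simp
      have "bsum (y,z,c) = bsum p" using x xq L_eq[OF qV p] by simp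
      then have "(y XOR z) XOR c = (a XOR b) XOR c" using abc by simp
      then have "a XOR b = y XOR z" by (metis xor_rc)
      then have ze: "z = b XOR (a XOR y)" by (rule xor_solve)
      have "x = psi (px p (sm (True,True,False) (a XOR y)))" using xq ze abc by simp
      moreover have "a XOR y < n" using lt y xlt by blast
      ultimately show "x \<in> psi ` coset (True,True,False) p" unfolding coset_def by blast
    qed
  qed
qed

lemma sm_TT: "sm f e = sm (True,True,True) x \<Longrightarrow> x \<noteq> 0 \<Longrightarrow> e = x"
  by (cases f) (auto split: if_splits)

lemma psi_inj_on: "q \<in> V \<Longrightarrow> q' \<in> V \<Longrightarrow> psi q = psi q' \<Longrightarrow> q = q'"
  using psi_inj by (simp add: inj_on_eq_iff)

lemma transv: "p \<in> V \<Longrightarrow> transversal_set n L (psi ` coset (True,True,True) p)"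
proof -
  assume p: "p \<in> V"
  let ?TT = "(True,True,True)"
  let ?Y = "coset ?TT p"
  obtain a b c where abc: "p = (a,b,c)" by (cases p) auto
  have lt: "a < n" "b < n" "c < n" using p abc V_iff by auto
  have YV: "?Y \<subseteq> V" using coset_V[OF p] .
  have mem: "x \<in> psi ` ?Y \<Longrightarrow> \<exists>g<n. x = psi (px p (sm ?TT g))" for x unfolding coset_def by auto
  have c1: "psi ` ?Y \<subseteq> cells n" using YV psi_cells by blast
  have injY: "inj_on psi ?Y" using psi_inj YV inj_on_subset by blast
  have c2: "card (psi ` ?Y) = n" using card_image[OF injY] card_coset[of ?TT p] by simp
  have fin: "finite (psi ` ?Y)" by simp
  have key: "g = h" if "g < n" "h < n" "fst (psi (px p (sm ?TT g))) = fst (psi (px p (sm ?TT h))) \<or>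
      snd (snd (psi (px p (sm ?TT g)))) = snd (snd (psi (px p (sm ?TT h))))" for g h
  proof -
    have "r1 (a XOR g) = r1 (a XOR h) \<or> r3 (c XOR g) = r3 (c XOR h)" using that(3) abc psi_eq by simp
    moreover have b: "a XOR g < n" "a XOR h < n" "c XOR g < n" "c XOR h < n" using lt that xlt by auto
    ultimately have "a XOR g = a XOR h \<or> c XOR g = c XOR h"
      using r_facts(13)[OF b(1,2)] r_facts(15)[OF b(3,4)] by blast
    then show "g = h" by simp
  qed
  have c3: "\<forall>l\<in>lines n. card (psi ` ?Y \<inter> l) \<le> 1"
  proof
    fix l assume l: "l \<in> lines n"
    have same: "fst x = fst y \<or> snd (snd x) = snd (snd y)" if "x \<in> l" "y \<in> l" for x y
    proof -
      have "(\<exists>i k. l = row n i k) \<or> (\<exists>j k. l = col n j k) \<or> (\<exists>i j. l = fil n i j)"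
        using l unfolding lines_def by blast
      then show ?thesis using that by (elim disjE exE) (auto simp: row_def col_def fil_def)
    qed
    have "\<forall>x\<in>psi ` ?Y \<inter> l. \<forall>y\<in>psi ` ?Y \<inter> l. x = y"
    proof (intro ballI)
      fix x y assume x: "x \<in> psi ` ?Y \<inter> l" and y: "y \<in> psi ` ?Y \<inter> l"
      obtain g where g: "g < n" "x = psi (px p (sm ?TT g))" using mem x by blast
      obtain h where h: "h < n" "y = psi (px p (sm ?TT h))" using mem y by blast
      have "fst x = fst y \<or> snd (snd x) = snd (snd y)" using same x y by blast
      then have "g = h" using key[OF g(1) h(1)] g(2) h(2) by simp
      then show "x = y" using g h by simp
    qed
    then show "card (psi ` ?Y \<inter> l) \<le> 1" using fin card_le_Suc0_iff_eq[of "psi ` ?Y \<inter> l"] by auto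
  qed
  have bs: "bsum (px p (sm ?TT g)) = bsum p XOR g" for g by (simp add: bsum_px)
  have c4: "inj_on L (psi ` ?Y)"
  proof (rule inj_onI)
    fix x y assume x: "x \<in> psi ` ?Y" and y: "y \<in> psi ` ?Y" and e: "L x = L y"
    obtain g where g: "g < n" "x = psi (px p (sm ?TT g))" using mem x by blast
    obtain h where h: "h < n" "y = psi (px p (sm ?TT h))" using mem y by blast
    have qV: "px p (sm ?TT g) \<in> V" "px p (sm ?TT h) \<in> V" using px_V[OF p sm_V[OF g(1)]] px_V[OF p sm_V[OF h(1)]] by blast+
    have "bsum (px p (sm ?TT g)) = bsum (px p (sm ?TT h))" using L_eq[OF qV] e g h by simp
    then have "g = h" using bs by simp
    then show "x = y" using g h by simp
  qed
  have c5: "\<forall>x\<in>psi ` ?Y. \<forall>y\<in>psi ` ?Y. x \<noteq> y \<longrightarrow> card {S \<in> three_cubes n L. x \<in> S \<and> y \<in> S} = 1"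
  proof (intro ballI impI)
    fix x y assume x: "x \<in> psi ` ?Y" and y: "y \<in> psi ` ?Y" and xy: "x \<noteq> y"
    obtain g where g: "g < n" "x = psi (px p (sm ?TT g))" using mem x by blast
    obtain h where h: "h < n" "y = psi (px p (sm ?TT h))" using mem y by blast
    define q where "q = px p (sm ?TT g)"
    define q' where "q' = px p (sm ?TT h)"
    define \<delta> where "\<delta> = g XOR h"
    have gh: "g \<noteq> h" using xy g h by auto
    have dl: "\<delta> < n" "\<delta> \<noteq> 0" using g h gh xlt \<delta>_def by auto
    have qV: "q \<in> V" "q' \<in> V" using px_V[OF p sm_V[OF g(1)]] px_V[OF p sm_V[OF h(1)]] q_def q'_def by blast+
    have "px q (sm ?TT \<delta>) = px p (px (sm ?TT g) (sm ?TT \<delta>))" unfolding q_def by (rule px_assoc)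
    also have "px (sm ?TT g) (sm ?TT \<delta>) = sm ?TT (g XOR \<delta>)" by (rule sm_xor[symmetric])
    also have "g XOR \<delta> = h" unfolding \<delta>_def by simp
    finally have q'q: "q' = px q (sm ?TT \<delta>)" unfolding q'_def by simp
    have "{S \<in> three_cubes n L. x \<in> S \<and> y \<in> S} = {psi ` cube q \<delta>}"
    proof
      show "{psi ` cube q \<delta>} \<subseteq> {S \<in> three_cubes n L. x \<in> S \<and> y \<in> S}"
      proof -
        have "psi ` cube q \<delta> \<in> three_cubes n L" using TC1[OF qV(1) dl] .
        moreover have "x \<in> psi ` cube q \<delta>" using g(2) q_def cube_base by blast
        moreover have "q' \<in> cube q \<delta>" using q'q cube_mem by blast
        then have "y \<in> psi ` cube q \<delta>" using h(2) q'_def by blast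
        ultimately show ?thesis by blast
      qed
      show "{S \<in> three_cubes n L. x \<in> S \<and> y \<in> S} \<subseteq> {psi ` cube q \<delta>}"
      proof
        fix S assume S: "S \<in> {S \<in> three_cubes n L. x \<in> S \<and> y \<in> S}"
        then obtain r e where r: "r \<in> V" "e < n" "e \<noteq> 0" "S = psi ` cube r e" using TC2 by blast
        have cr: "cube r e \<subseteq> V" using cube_V r by blast
        obtain z where z: "z \<in> cube r e" "psi q = psi z" using S r g q_def by auto
        then have qz: "q \<in> cube r e" using psi_inj_on[OF qV(1)] cr by blast
        obtain z' where z': "z' \<in> cube r e" "psi q' = psi z'" using S r h q'_def by auto
        then have "q' \<in> cube r e" using psi_inj_on[OF qV(2)] cr by blast
        then have "q' \<in> cube q e" using cube_rebase[OF qz] by simp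
        then obtain f where "q' = px q (sm f e)" using cube_mem by blast
        then have "sm f e = sm ?TT \<delta>" using q'q by simp
        then have "e = \<delta>" using sm_TT dl by blast
        then show "S \<in> {psi ` cube q \<delta>}" using r cube_rebase[OF qz] by simp
      qed
    qed
    then show "card {S \<in> three_cubes n L. x \<in> S \<and> y \<in> S} = 1" by simp
  qed
  show ?thesis unfolding transversal_set_def using c1 c2 c3 c4 c5 by blast
qed

lemma conf_card: "X \<subseteq> cells n \<Longrightarrow> Y \<subseteq> V \<Longrightarrow> card (phi ` X \<inter> Y) = card (psi ` Y \<inter> X)"
proof -
  assume X: "X \<subseteq> cells n" and Y: "Y \<subseteq> V"
  have eq: "psi ` (phi ` X \<inter> Y) = psi ` Y \<inter> X"
  proof (rule set_eqI)
    fix z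
    show "z \<in> psi ` (phi ` X \<inter> Y) \<longleftrightarrow> z \<in> psi ` Y \<inter> X"
    proof
      assume "z \<in> psi ` (phi ` X \<inter> Y)"
      then obtain x where x: "x \<in> X" "phi x \<in> Y" "z = psi (phi x)" by blast
      have "psi (phi x) = x" using X x(1) by (intro psi_phi) blast
      then have "z = x" using x(3) by simp
      then show "z \<in> psi ` Y \<inter> X" using x by blast
    next
      assume z: "z \<in> psi ` Y \<inter> X"
      then obtain y where y: "y \<in> Y" "z = psi y" by blast
      have "phi (psi y) = y" using Y y(1) by (intro phi_psi) blast
      then have py: "phi z = y" using y(2) by simp
      have "z \<in> X" using z by blast
      then have "phi z \<in> phi ` X" by (rule imageI)
      then have "phi z \<in> phi ` X \<inter> Y" using py y(1) by simp
      then show "z \<in> psi ` (phi ` X \<inter> Y)" using y(2) py by (metis imageI)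
    qed
  qed
  have "phi ` X \<inter> Y \<subseteq> V" using Y by blast
  then have "inj_on psi (phi ` X \<inter> Y)" using psi_inj by (rule inj_on_subset[rotated])
  then have "card (psi ` (phi ` X \<inter> Y)) = card (phi ` X \<inter> Y)" by (rule card_image)
  then show ?thesis using eq by simp
qed

lemma hC_tr:
  fixes \<kappa> :: real and X :: "cell set"
  assumes X: "X \<subseteq> cells n"
    and ha': "\<forall>l\<in>lines n. real (card (l \<inter> X)) \<le> \<kappa> * n"
    and hd': "\<forall>Y\<in>symbol_sets n L. real (card (Y \<inter> X)) \<le> \<kappa> * n"
    and he': "\<forall>T. transversal_set n L T \<longrightarrow> real (card (T \<inter> X)) \<le> \<kappa> * n"
  shows "\<forall>e\<in>EE. \<forall>p\<in>V. real (card (phi ` X \<inter> coset e p)) \<le> \<kappa> * n"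
proof (intro ballI)
  fix e p assume e: "e \<in> EE" and p: "p \<in> V"
  obtain a b c where abc: "p = (a,b,c)" by (cases p) auto
  have lt: "a < n" "b < n" "c < n" using p abc V_iff by auto
  have r: "r1 a \<in> {1..n}" "r2 b \<in> {1..n}" "r3 c \<in> {1..n}" using lt r_facts(1-3) by auto
  have Lp: "L (psi p) \<in> {1..n}" using L_psi[OF p] tau_range[OF bsum_lt[OF p]] by simp
  have cc: "card (phi ` X \<inter> coset e p) = card (psi ` coset e p \<inter> X)"
    using conf_card[OF X coset_V[OF p]] .
  have "e = (True,False,False) \<or> e = (False,True,False) \<or> e = (False,False,True) \<or>
        e = (True,True,False) \<or> e = (True,False,True) \<or> e = (False,True,True) \<or> e = (True,True,True)"
    using e unfolding EE_explicit by blast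
  then have "real (card (psi ` coset e p \<inter> X)) \<le> \<kappa> * n"
  proof (elim disjE)
    assume e: "e = (True,False,False)"
    have "col n (r2 b) (r3 c) \<in> lines n" unfolding lines_def using r by blast
    then show ?thesis using ha' line_col[OF p abc] e by simp
  next
    assume e: "e = (False,True,False)"
    have "row n (r1 a) (r3 c) \<in> lines n" unfolding lines_def using r by blast
    then show ?thesis using ha' line_row[OF p abc] e by simp
  next
    assume e: "e = (False,False,True)"
    have "fil n (r1 a) (r2 b) \<in> lines n" unfolding lines_def using r by blast
    then show ?thesis using ha' line_fil[OF p abc] e by simp
  next
    assume e: "e = (True,True,False)"
    have "file_layer n (r3 c) \<in> layers n" unfolding layers_def using r by blast
    then have "{x \<in> file_layer n (r3 c). L x = L (psi p)} \<in> symbol_sets n L"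
      unfolding symbol_sets_def using Lp by blast
    then show ?thesis using hd' sym_fil[OF p abc] e by simp
  next
    assume e: "e = (True,False,True)"
    have "col_layer n (r2 b) \<in> layers n" unfolding layers_def using r by blast
    then have "{x \<in> col_layer n (r2 b). L x = L (psi p)} \<in> symbol_sets n L"
      unfolding symbol_sets_def using Lp by blast
    then show ?thesis using hd' sym_col[OF p abc] e by simp
  next
    assume e: "e = (False,True,True)"
    have "row_layer n (r1 a) \<in> layers n" unfolding layers_def using r by blast
    then have "{x \<in> row_layer n (r1 a). L x = L (psi p)} \<in> symbol_sets n L"
      unfolding symbol_sets_def using Lp by blast
    then show ?thesis using hd' sym_row[OF p abc] e by simp
  next
    assume e: "e = (True,True,True)"
    then show ?thesis using he' transv[OF p] by simp
  qed
  then show "real (card (phi ` X \<inter> coset e p)) \<le> \<kappa> * n" using cc by simp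
qed

lemma hok_tr:
  fixes \<alpha> :: real
  assumes hf': "\<forall>c\<in>cells n. real (card {S. allowed n L A S \<and> c \<in> S}) \<ge> \<alpha> * n"
  shows "\<forall>p\<in>V. real (card {d. d < n \<and> d \<noteq> 0 \<and> allowed n L A (psi ` cube p d)}) \<ge> \<alpha> * n"
proof
  fix p assume p: "p \<in> V"
  let ?D = "{d. d < n \<and> d \<noteq> 0 \<and> allowed n L A (psi ` cube p d)}"
  have sub: "{S. allowed n L A S \<and> psi p \<in> S} \<subseteq> (\<lambda>d. psi ` cube p d) ` ?D"
  proof
    fix S assume S: "S \<in> {S. allowed n L A S \<and> psi p \<in> S}"
    then have "S \<in> three_cubes n L" unfolding allowed_def by blast
    then obtain r d where r: "r \<in> V" "d < n" "d \<noteq> 0" "S = psi ` cube r d" using TC2 by blast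
    have cr: "cube r d \<subseteq> V" using cube_V r by blast
    obtain z where z: "z \<in> cube r d" "psi p = psi z" using S r by auto
    then have "p \<in> cube r d" using psi_inj_on[OF p] cr by blast
    then have "cube r d = cube p d" using cube_rebase by simp
    then have "S = psi ` cube p d" using r by simp
    moreover have "d \<in> ?D" using r S calculation by simp
    ultimately show "S \<in> (\<lambda>d. psi ` cube p d) ` ?D" by blast
  qed
  have finD: "finite ?D" by (rule finite_subset[of _ "{..<n}"]) auto
  have "card {S. allowed n L A S \<and> psi p \<in> S} \<le> card ((\<lambda>d. psi ` cube p d) ` ?D)"
    using sub finD by (intro card_mono) auto
  also have "\<dots> \<le> card ?D" using finD by (rule card_image_le)
  finally have "real (card {S. allowed n L A S \<and> psi p \<in> S}) \<le> real (card ?D)" by simp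
  moreover have "\<alpha> * n \<le> real (card {S. allowed n L A S \<and> psi p \<in> S})"
    using hf' psi_cells[OF p] by blast
  ultimately show "\<alpha> * n \<le> real (card ?D)" by linarith
qed

end

context tr
begin

context
  fixes F :: "pt set set" and A :: "cell \<Rightarrow> nat set"
  assumes gF: "\<forall>Q\<in>F. \<exists>p\<in>V. \<exists>d<n. d \<noteq> 0 \<and> Q = cube p d \<and> allowed n L A (psi ` Q)"
    and dF: "\<forall>Q1\<in>F. \<forall>Q2\<in>F. Q1 \<noteq> Q2 \<longrightarrow> Q1 \<inter> Q2 = {}"
begin

definition Fc :: "cell set set" where "Fc = (\<lambda>Q. psi ` Q) ` F"
definition D :: "pt \<Rightarrow> nat" where
  "D q = (if q \<in> \<Union>F then (SOME d. \<exists>Q\<in>F. \<exists>p. q \<in> Q \<and> Q = cube p d) else 0)"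

lemma QV: "Q \<in> F \<Longrightarrow> Q \<subseteq> V"
  using gF cube_V by blast

lemma Q_unique: "Q \<in> F \<Longrightarrow> Q' \<in> F \<Longrightarrow> q \<in> Q \<Longrightarrow> q \<in> Q' \<Longrightarrow> Q = Q'"
  using dF by blast

lemma Dval: "Q \<in> F \<Longrightarrow> q \<in> Q \<Longrightarrow> Q = cube p d \<Longrightarrow> D q = d"
proof -
  assume Q: "Q \<in> F" and q: "q \<in> Q" and Qc: "Q = cube p d"
  have ex: "\<exists>d. \<exists>Q\<in>F. \<exists>p. q \<in> Q \<and> Q = cube p d" using Q q Qc by blast
  have "q \<in> \<Union>F" using Q q by blast
  then have Dq: "D q = (SOME d. \<exists>Q\<in>F. \<exists>p. q \<in> Q \<and> Q = cube p d)" unfolding D_def by simp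
  from someI_ex[OF ex] obtain Q' p' where Q': "Q' \<in> F" "q \<in> Q'" "Q' = cube p' (D q)"
    unfolding Dq[symmetric] by blast
  have "Q' = Q" using Q_unique Q' Q q by blast
  then show ?thesis using Q' Qc cube_d_unique by metis
qed

lemma D0: "q \<notin> \<Union>F \<Longrightarrow> D q = 0" unfolding D_def by simp

lemma Dlt: "D q < n"
proof (cases "q \<in> \<Union>F")
  case True
  then obtain Q where Q: "Q \<in> F" "q \<in> Q" by blast
  then obtain p d where "d < n" "Q = cube p d" using gF by blast
  then show ?thesis using Dval Q by simp
next
  case False
  then show ?thesis using D0 n_pos by simp
qed

lemma psi_in_Fc: "q \<in> V \<Longrightarrow> (\<exists>S\<in>Fc. psi q \<in> S) \<longleftrightarrow> q \<in> \<Union>F"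
proof
  assume q: "q \<in> V"
  show "\<exists>S\<in>Fc. psi q \<in> S \<Longrightarrow> q \<in> \<Union>F"
  proof -
    assume "\<exists>S\<in>Fc. psi q \<in> S"
    then obtain Q z where Q: "Q \<in> F" "z \<in> Q" "psi q = psi z" unfolding Fc_def by blast
    then have "q = z" using psi_inj_on[OF q] QV by blast
    then show "q \<in> \<Union>F" using Q by blast
  qed
  show "q \<in> \<Union>F \<Longrightarrow> \<exists>S\<in>Fc. psi q \<in> S" unfolding Fc_def by blast
qed

lemma SA1: "q \<in> V \<Longrightarrow> Q \<in> F \<Longrightarrow> q \<in> Q \<Longrightarrow> swap_all L Fc (psi q) = swap L (psi ` Q) (psi q)"
proof -
  assume q: "q \<in> V" and Q: "Q \<in> F" "q \<in> Q"
  have ex: "\<exists>S\<in>Fc. psi q \<in> S" using psi_in_Fc q Q by blast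
  have "(THE S. S \<in> Fc \<and> psi q \<in> S) = psi ` Q"
  proof (rule the_equality)
    show "psi ` Q \<in> Fc \<and> psi q \<in> psi ` Q" unfolding Fc_def using Q by blast
    fix S assume S: "S \<in> Fc \<and> psi q \<in> S"
    then obtain Q' z where Q': "Q' \<in> F" "S = psi ` Q'" "z \<in> Q'" "psi q = psi z" unfolding Fc_def by blast
    then have "q = z" using psi_inj_on[OF q] QV by blast
    then have "Q' = Q" using Q_unique Q Q' by blast
    then show "S = psi ` Q" using Q' by simp
  qed
  then show ?thesis unfolding swap_all_def using ex by simp
qed

lemma SA2: "q \<in> V \<Longrightarrow> q \<notin> \<Union>F \<Longrightarrow> swap_all L Fc (psi q) = L (psi q)"
  unfolding swap_all_def using psi_in_Fc by simp

lemma MV: "q \<in> V \<Longrightarrow> swap_all L Fc (psi q) = \<tau> ((bsum q XOR D q) + 1)"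
proof (cases "q \<in> \<Union>F")
  case True
  assume q: "q \<in> V"
  then obtain Q where Q: "Q \<in> F" "q \<in> Q" using True by blast
  then obtain p d where pd: "p \<in> V" "d < n" "d \<noteq> 0" "Q = cube p d" using gF by blast
  have "swap_all L Fc (psi q) = swap L (psi ` cube p d) (psi q)" using SA1[OF q Q] pd by simp
  also have "\<dots> = \<tau> ((bsum q XOR d) + 1)" using SW pd Q by simp
  finally show ?thesis using Dval[OF Q pd(4)] by simp
next
  case False
  assume q: "q \<in> V"
  then show ?thesis using SA2[OF q False] D0[OF False] L_psi[OF q] by simp
qed

lemma D3: "q \<in> V \<Longrightarrow> D (px q (sm u (D q))) = D q \<and> px q (sm u (D q)) \<in> coset u q"
proof (cases "q \<in> \<Union>F")
  case True
  assume q: "q \<in> V"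
  then obtain Q where Q: "Q \<in> F" "q \<in> Q" using True by blast
  then obtain p d where pd: "p \<in> V" "d < n" "d \<noteq> 0" "Q = cube p d" using gF by blast
  have Dq: "D q = d" using Dval[OF Q pd(4)] .
  have "px q (sm u d) \<in> cube q d" using cube_mem by blast
  then have "px q (sm u d) \<in> Q" using cube_rebase pd(4) Q(2) by simp
  then have "D (px q (sm u d)) = d" using Dval Q(1) pd(4) by blast
  moreover have "px q (sm u d) \<in> coset u q" unfolding coset_def using pd(2) by blast
  ultimately show ?thesis using Dq by simp
next
  case False
  assume q: "q \<in> V"
  then show ?thesis using D0[OF False] coset_self by simp
qed

lemma line_unique:
  assumes u: "u \<in> {(True,False,False),(False,True,False),(False,False,True)}" and p: "p \<in> V" and x: "x \<in> {1..n}"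
  shows "\<exists>!c. c \<in> psi ` coset u p \<and> swap_all L Fc c = x"
proof -
  let ?M = "swap_all L Fc"
  have uz: "u \<noteq> z0" using u by auto
  obtain z where z: "z \<in> {1..n}" "x = \<tau> z" using x bij_betw_imp_surj_on[OF bt] by (metis imageE)
  define y where "y = z - 1"
  have y: "y < n" "x = \<tau> (y + 1)" using z y_def by auto
  have cV: "coset u p \<subseteq> V" using coset_V[OF p] .
  define h where "h = (\<lambda>q. px q (sm u (D q)))"
  have hD: "q \<in> V \<Longrightarrow> D (h q) = D q" for q using D3 h_def by blast
  have hc: "q \<in> V \<Longrightarrow> h q \<in> coset u q" for q using D3 h_def by blast
  have hh: "q \<in> V \<Longrightarrow> h (h q) = q" for q using hD[of q] unfolding h_def by simp
  have Mq: "q \<in> V \<Longrightarrow> ?M (psi q) = \<tau> ((bsum q XOR D q) + 1)" for q using MV by blast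
  have bl: "q \<in> V \<Longrightarrow> bsum q XOR D q < n" for q using bsum_lt Dlt xlt by blast
  have ex: "\<exists>c. c \<in> psi ` coset u p \<and> ?M c = x"
  proof -
    define g0 where "g0 = bsum p XOR y"
    have g0: "g0 < n" using bsum_lt[OF p] y xlt g0_def by blast
    define q0 where "q0 = px p (sm u g0)"
    have q0c: "q0 \<in> coset u p" unfolding coset_def q0_def using g0 by blast
    have q0V: "q0 \<in> V" using q0c cV by blast
    have bq0: "bsum q0 = y" unfolding q0_def g0_def using u by (auto simp: bsum_px)
    define q1 where "q1 = h q0"
    have q1c: "q1 \<in> coset u p" using hc[OF q0V] coset_mem[OF q0c] q1_def by simp
    have q1V: "q1 \<in> V" using q1c cV by blast
    have "bsum q1 = y XOR D q0" unfolding q1_def h_def using bq0 u by (auto simp: bsum_px)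
    then have "bsum q1 XOR D q1 = y" using hD[OF q0V] q1_def by simp
    then have "?M (psi q1) = x" using Mq[OF q1V] y by simp
    then show ?thesis using q1c by blast
  qed
  have uniq: "c = c'" if A: "c \<in> psi ` coset u p" "?M c = x" "c' \<in> psi ` coset u p" "?M c' = x" for c c'
  proof -
    obtain q where q: "q \<in> coset u p" "c = psi q" using A(1) by blast
    obtain q' where q': "q' \<in> coset u p" "c' = psi q'" using A(3) by blast
    have qV: "q \<in> V" "q' \<in> V" using q q' cV by blast+
    have "\<tau> ((bsum q XOR D q) + 1) = \<tau> ((bsum q' XOR D q') + 1)"
      using A(2,4) q q' Mq qV by simp
    then have e: "bsum q XOR D q = bsum q' XOR D q'" using tau_inj bl qV by blast
    have "coset u q = coset u p" using q(1) by (rule coset_mem)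
    then have "q' \<in> coset u q" using q' by simp
    then obtain g where g: "g < n" "q' = px q (sm u g)" unfolding coset_def by blast
    have "bsum q' = bsum q XOR g" using g u by (auto simp: bsum_px)
    then have "bsum q XOR D q = bsum q XOR (g XOR D q')" using e by (simp add: xor.assoc)
    then have Dq: "D q = g XOR D q'" by simp
    have "h q' = px (px q (sm u g)) (sm u (D q'))" unfolding h_def g(2) ..
    also have "\<dots> = px q (sm u (g XOR D q'))" by (simp only: px_assoc sm_xor)
    also have "\<dots> = h q" unfolding h_def Dq ..
    finally have "h q' = h q" .
    then have "q = q'" using hh qV by metis
    then show "c = c'" using q q' by simp
  qed
  show ?thesis using ex uniq by blast
qed

lemma lines_repr: "l \<in> lines n \<Longrightarrow> \<exists>u\<in>{(True,False,False),(False,True,False),(False,False,True)}. \<exists>p\<in>V. l = psi ` coset u p"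
proof -
  assume l: "l \<in> lines n"
  have "(\<exists>i k. i \<in> {1..n} \<and> k \<in> {1..n} \<and> l = row n i k) \<or> (\<exists>j k. j \<in> {1..n} \<and> k \<in> {1..n} \<and> l = col n j k) \<or>
        (\<exists>i j. i \<in> {1..n} \<and> j \<in> {1..n} \<and> l = fil n i j)"
    using l unfolding lines_def by blast
  then show ?thesis
  proof (elim disjE exE conjE)
    fix i k assume ik: "i \<in> {1..n}" "k \<in> {1..n}" "l = row n i k"
    define p where "p = (s1 i - 1, 0::nat, s3 k - 1)"
    have pV: "p \<in> V" unfolding p_def V_iff using ik r_facts(7,9) n_pos by auto
    have "psi ` coset (False,True,False) p = row n (r1 (s1 i - 1)) (r3 (s3 k - 1))"
      using line_row[OF pV] p_def by simp
    also have "\<dots> = l" using ik r_facts(10,12) by simp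
    finally show ?thesis using pV by blast
  next
    fix j k assume jk: "j \<in> {1..n}" "k \<in> {1..n}" "l = col n j k"
    define p where "p = (0::nat, s2 j - 1, s3 k - 1)"
    have pV: "p \<in> V" unfolding p_def V_iff using jk r_facts(8,9) n_pos by auto
    have "psi ` coset (True,False,False) p = col n (r2 (s2 j - 1)) (r3 (s3 k - 1))"
      using line_col[OF pV] p_def by simp
    also have "\<dots> = l" using jk r_facts(11,12) by simp
    finally show ?thesis using pV by blast
  next
    fix i j assume ij: "i \<in> {1..n}" "j \<in> {1..n}" "l = fil n i j"
    define p where "p = (s1 i - 1, s2 j - 1, 0::nat)"
    have pV: "p \<in> V" unfolding p_def V_iff using ij r_facts(7,8) n_pos by auto
    have "psi ` coset (False,False,True) p = fil n (r1 (s1 i - 1)) (r2 (s2 j - 1))"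
      using line_fil[OF pV] p_def by simp
    also have "\<dots> = l" using ij r_facts(10,11) by simp
    finally show ?thesis using pV by blast
  qed
qed

lemma latin_M: "latin_cube n (swap_all L Fc)"
  unfolding latin_cube_def
proof (intro conjI ballI)
  fix c assume c: "c \<in> cells n"
  have pV: "phi c \<in> V" using phi_V[OF c] .
  have "swap_all L Fc c = \<tau> ((bsum (phi c) XOR D (phi c)) + 1)" using MV[OF pV] psi_phi[OF c] by simp
  moreover have "bsum (phi c) XOR D (phi c) < n" using bsum_lt[OF pV] Dlt xlt by blast
  ultimately show "swap_all L Fc c \<in> {1..n}" using tau_range by simp
next
  fix l x assume l: "l \<in> lines n" and x: "x \<in> {1..n}"
  obtain u p where up: "u \<in> {(True,False,False),(False,True,False),(False,False,True)}" "p \<in> V"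
    "l = psi ` coset u p" using lines_repr[OF l] by blast
  show "\<exists>!c. c \<in> l \<and> swap_all L Fc c = x" using line_unique[OF up(1,2) x] up(3) by simp
qed

lemma avoid_M: "phi ` conflicts n L A \<subseteq> \<Union>F \<Longrightarrow> avoids n (swap_all L Fc) A"
proof -
  assume cov: "phi ` conflicts n L A \<subseteq> \<Union>F"
  have "c \<notin> conflicts n (swap_all L Fc) A" for c
  proof
    assume cc: "c \<in> conflicts n (swap_all L Fc) A"
    then have c: "c \<in> cells n" "swap_all L Fc c \<in> A c" unfolding conflicts_def by auto
    define q where "q = phi c"
    have qV: "q \<in> V" and cq: "c = psi q" using phi_V[OF c(1)] psi_phi[OF c(1)] q_def by auto
    show False
    proof (cases "q \<in> \<Union>F")
      case True
      then obtain Q where Q: "Q \<in> F" "q \<in> Q" by blast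
      have "allowed n L A (psi ` Q)" using gF Q by blast
      then have "swap L (psi ` Q) c \<notin> A c" unfolding allowed_def using Q cq by blast
      then show False using SA1[OF qV Q] c cq by simp
    next
      case False
      then have "L c \<in> A c" using SA2[OF qV False] c cq by simp
      then have "c \<in> conflicts n L A" unfolding conflicts_def using c by simp
      then have "q \<in> \<Union>F" using cov q_def by blast
      then show False using False by simp
    qed
  qed
  then show ?thesis unfolding avoids_def by blast
qed

lemma Fc_props: "phi ` conflicts n L A \<subseteq> \<Union>F \<Longrightarrow>
   (\<forall>S\<in>Fc. allowed n L A S) \<and> (\<forall>S1\<in>Fc. \<forall>S2\<in>Fc. S1 \<noteq> S2 \<longrightarrow> S1 \<inter> S2 = {}) \<and>
   conflicts n L A \<subseteq> \<Union>Fc"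
proof (intro conjI)
  assume cov: "phi ` conflicts n L A \<subseteq> \<Union>F"
  show "\<forall>S\<in>Fc. allowed n L A S" unfolding Fc_def using gF by blast
  show "\<forall>S1\<in>Fc. \<forall>S2\<in>Fc. S1 \<noteq> S2 \<longrightarrow> S1 \<inter> S2 = {}"
  proof (intro ballI impI)
    fix S1 S2 assume S: "S1 \<in> Fc" "S2 \<in> Fc" "S1 \<noteq> S2"
    then obtain Q1 Q2 where Q: "Q1 \<in> F" "Q2 \<in> F" "S1 = psi ` Q1" "S2 = psi ` Q2" unfolding Fc_def by blast
    then have "Q1 \<noteq> Q2" using S by blast
    then have "Q1 \<inter> Q2 = {}" using dF Q by blast
    moreover have "psi ` Q1 \<inter> psi ` Q2 = psi ` (Q1 \<inter> Q2)"
      using inj_on_image_Int[OF psi_inj QV[OF Q(1)] QV[OF Q(2)]] by simp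
    ultimately show "S1 \<inter> S2 = {}" using Q by simp
  qed
  show "conflicts n L A \<subseteq> \<Union>Fc"
  proof
    fix c assume c: "c \<in> conflicts n L A"
    then have cc: "c \<in> cells n" unfolding conflicts_def by simp
    have "phi c \<in> \<Union>F" using cov c by blast
    then obtain Q where Q: "Q \<in> F" "phi c \<in> Q" by blast
    then have "c \<in> psi ` Q" using psi_phi[OF cc] by (metis imageI)
    then show "c \<in> \<Union>Fc" unfolding Fc_def using Q by blast
  qed
qed

end
end

theorem mainTheorem3:
  fixes t n m :: nat and L :: "cell \<Rightarrow> nat" and A :: "cell \<Rightarrow> nat set"
    and \<alpha> \<gamma> \<kappa> \<theta> \<epsilon> :: real
  assumes hn: "n = 2 ^ t"
    and hL: "latin_cube n L" and hiso: "iso_boolean n L"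
    and hA: "mmmm_cube n m A"
    and h\<theta>: "\<theta> > 0"
    and h\<epsilon>: "\<epsilon> * n \<ge> 3"
    and hineq: "\<alpha> * n - 21 * \<kappa> * n - 7 * \<epsilon> * n - (84 * \<kappa> / \<epsilon>) * n
                 - (21 * \<theta> / \<epsilon>) * n - (80 * \<kappa> / \<theta>) * n - 28 > 0"
    and ha: "\<forall>l \<in> lines n. real (card (l \<inter> conflicts n L A)) \<le> \<kappa> * n"
    and hd: "\<forall>Y \<in> symbol_sets n L. real (card (Y \<inter> conflicts n L A)) \<le> \<kappa> * n"
    and he: "\<forall>T. transversal_set n L T \<longrightarrow> real (card (T \<inter> conflicts n L A)) \<le> \<kappa> * n"
    and hf: "\<forall>c \<in> cells n. real (card {S. allowed n L A S \<and> c \<in> S}) \<ge> \<alpha> * n"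
  shows "\<exists>F. (\<forall>S \<in> F. allowed n L A S) \<and>
             (\<forall>S1 \<in> F. \<forall>S2 \<in> F. S1 \<noteq> S2 \<longrightarrow> S1 \<inter> S2 = {}) \<and>
             conflicts n L A \<subseteq> \<Union> F \<and>
             latin_cube n (swap_all L F) \<and> avoids n (swap_all L F) A"

proof -
  obtain \<sigma>1 \<sigma>2 \<sigma>3 \<tau> where sig: "bij_betw \<sigma>1 {1..n} {1..n}" "bij_betw \<sigma>2 {1..n} {1..n}"
     "bij_betw \<sigma>3 {1..n} {1..n}" "bij_betw \<tau> {1..n} {1..n}"
     "\<forall>i \<in> {1..n}. \<forall>j \<in> {1..n}. \<forall>k \<in> {1..n}. L (i, j, k) = \<tau> (boolean_cube (\<sigma>1 i, \<sigma>2 j, \<sigma>3 k))"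
    using hiso unfolding iso_boolean_def by blast
  interpret tr t n \<sigma>1 \<sigma>2 \<sigma>3 \<tau> L
    using sig hn by unfold_locales auto
  show ?thesis
  proof (cases "conflicts n L A = {}")
    case True
    have "swap_all L {} = L" unfolding swap_all_def by (rule ext) simp
    then show ?thesis using True hL unfolding avoids_def by (intro exI[of _ "{}"]) simp
  next
    case False
    define C where "C = phi ` conflicts n L A"
    have confc: "conflicts n L A \<subseteq> cells n" unfolding conflicts_def by blast
    interpret core t n C "\<lambda>Q. allowed n L A (psi ` Q)" \<alpha> \<kappa> \<theta> \<epsilon>
    proof unfold_locales
      show "C \<subseteq> V" unfolding C_def using confc phi_V by blast
      show "\<forall>e\<in>EE. \<forall>p\<in>V. real (card (C \<inter> coset e p)) \<le> \<kappa> * real n"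
        unfolding C_def using hC_tr[OF confc ha hd he] .
      show "\<forall>p\<in>C. \<alpha> * real n \<le> real (card {d. d < n \<and> d \<noteq> 0 \<and> allowed n L A (psi ` cube p d)})"
        unfolding C_def using hok_tr[OF hf] confc phi_V by blast
      show "3 \<le> \<epsilon> * real n" by (rule h\<epsilon>)
      show "0 < \<theta>" by (rule h\<theta>)
      show "0 < \<alpha> * real n - 21 * \<kappa> * real n - 7 * \<epsilon> * real n - 84 * \<kappa> / \<epsilon> * real n -
          21 * \<theta> / \<epsilon> * real n - 80 * \<kappa> / \<theta> * real n - 28" using hineq .
      show "C \<noteq> {}" unfolding C_def using False by blast
    qed
    obtain F where F: "\<forall>Q\<in>F. good Q" "disj F" "C \<subseteq> \<Union>F" using core_main by blast
    have gF: "\<forall>Q\<in>F. \<exists>p\<in>V. \<exists>d<n. d \<noteq> 0 \<and> Q = cube p d \<and> allowed n L A (psi ` Q)"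
      using F(1) unfolding good_def by blast
    have dF: "\<forall>Q1\<in>F. \<forall>Q2\<in>F. Q1 \<noteq> Q2 \<longrightarrow> Q1 \<inter> Q2 = {}" using F(2) unfolding disj_def .
    have cov: "phi ` conflicts n L A \<subseteq> \<Union>F" using F(3) unfolding C_def .
    note P = Fc_props[OF gF dF cov] latin_M[OF gF dF] avoid_M[OF gF dF cov]
    show ?thesis using P by blast
  qed
qed

end
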